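(* Let $$B(p)=\prod_{i=1}^r\big(B_{[c_i]}(p)\big)^{m_i}\ \prod_{i=1}^{\star\, s}\ \prod_{j=1}^{\star\, n_i}B_{\alpha_{ij}}(p)$$ be a finite Blaschke product in the unit ball $\mathbb B$ (with $c_i,\alpha_{ij}\in\mathbb B\setminus\{0\}$), of degree $d=\sum_{i=1}^r2m_i+\sum_{i=1}^sn_i$. Then the reproducing kernel Hilbert space $\mathcal H(B)$ with reproducing kernel $K_B(p,q)=\sum_{n=0}^\infty p^n\big(1-B(p)\overline{B(q)}\big)\bar q^n$, $p,q\in\mathbb B$, has dimension $\dim\mathcal H(B)=d$.
   Context: $B_a(p)=(1-p\bar a)^{-\star}\star(a-p)\frac{\bar a}{|a|}$ for $a\in\mathbb B\setminus\{0\}$, and $B_{[a]}(p)=(1-2{\rm Re}(a)p+p^2|a|^2)^{-1}(|a|^2-2{\rm Re}(a)p+p^2)$; $\star$ denotes the slice hyperholomorphic ($\star$-)product and $f^{-\star}$ the $\star$-inverse. $\mathcal H(B)$ is a right quaternionic Hilbert space of slice hyperholomorphic functions on $\mathbb B$. *)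

theory Defs
  imports "HOL-Analysis.Analysis"
begin

text \<open>A quaternion z + w j is represented by the pair (z, w) of complex numbers.
  Addition, real scaling, the norm (= the Euclidean norm of R^4) and the
  topology are those of the product type complex \<times> complex.\<close>

type_synonym quat = "complex \<times> complex"

definition qmul :: "quat \<Rightarrow> quat \<Rightarrow> quat" where
  "qmul x y = (fst x * fst y - snd x * cnj (snd y), fst x * snd y + snd x * cnj (fst y))"

definition qcnj :: "quat \<Rightarrow> quat" where
  "qcnj x = (cnj (fst x), - snd x)"

definition qre :: "quat \<Rightarrow> real" where
  "qre x = Re (fst x)"

definition qreal :: "real \<Rightarrow> quat" where
  "qreal r = (complex_of_real r, 0)"

fun qpow :: "quat \<Rightarrow> nat \<Rightarrow> quat" where
  "qpow x 0 = qreal 1"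
| "qpow x (Suc n) = qmul x (qpow x n)"

definition qball :: "quat set" where
  "qball = {p. norm p < 1}"

text \<open>A slice hyperholomorphic function on the unit ball is f(p) = \<Sum> p^n a_n
  (coefficients on the right); we work with coefficient sequences.\<close>

definition qeval :: "(nat \<Rightarrow> quat) \<Rightarrow> quat \<Rightarrow> quat" where
  "qeval a p = (\<Sum>n. qmul (qpow p n) (a n))"

definition cstar :: "(nat \<Rightarrow> quat) \<Rightarrow> (nat \<Rightarrow> quat) \<Rightarrow> (nat \<Rightarrow> quat)" where
  "cstar a b = (\<lambda>n. \<Sum>k\<le>n. qmul (a k) (b (n - k)))"

definition qunit :: "nat \<Rightarrow> quat" where
  "qunit = (\<lambda>n. if n = 0 then qreal 1 else 0)"

definition sinv :: "(nat \<Rightarrow> quat) \<Rightarrow> (nat \<Rightarrow> quat)" where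
  "sinv a = (THE c. cstar a c = qunit \<and> cstar c a = qunit)"

fun cpow :: "(nat \<Rightarrow> quat) \<Rightarrow> nat \<Rightarrow> (nat \<Rightarrow> quat)" where
  "cpow a 0 = qunit"
| "cpow a (Suc m) = cstar a (cpow a m)"

definition cpoly :: "quat list \<Rightarrow> (nat \<Rightarrow> quat)" where
  "cpoly xs = (\<lambda>n. if n < length xs then xs ! n else 0)"

definition cscal :: "(nat \<Rightarrow> quat) \<Rightarrow> quat \<Rightarrow> (nat \<Rightarrow> quat)" where
  "cscal a c = (\<lambda>n. qmul (a n) c)"

text \<open>B_a(p) = (1 - p a')^{-\<star>} \<star> (a - p) a'/|a|, where a' is the conjugate of a.\<close>
definition blaschke :: "quat \<Rightarrow> (nat \<Rightarrow> quat)" where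
  "blaschke a = cscal (cstar (sinv (cpoly [qreal 1, - qcnj a])) (cpoly [a, - qreal 1]))
                      ((1 / norm a) *\<^sub>R qcnj a)"

text \<open>B_[a](p) = (1 - 2Re(a) p + p^2 |a|^2)^{-1} (|a|^2 - 2 Re(a) p + p^2).\<close>
definition blaschke_sph :: "quat \<Rightarrow> (nat \<Rightarrow> quat)" where
  "blaschke_sph a = cstar
      (sinv (cpoly [qreal 1, qreal (- 2 * qre a), qreal ((norm a)\<^sup>2)]))
      (cpoly [qreal ((norm a)\<^sup>2), qreal (- 2 * qre a), qreal 1])"

text \<open>The finite Blaschke product
  \<Prod>_{i} (B_[c_i])^{m_i} \<star> \<Prod>^\<star>_{i} \<Prod>^\<star>_{j} B_{\<alpha>_{ij}};
  cms lists the pairs (c_i, m_i), als lists the lists [\<alpha>_{i1},...,\<alpha>_{in_i}].\<close>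
definition blaschke_prod :: "(quat \<times> nat) list \<Rightarrow> quat list list \<Rightarrow> (nat \<Rightarrow> quat)" where
  "blaschke_prod cms als =
     cstar (foldr (\<lambda>(c, m) acc. cstar (cpow (blaschke_sph c) m) acc) cms qunit)
           (foldr (\<lambda>a acc. cstar (blaschke a) acc) (concat als) qunit)"

definition blaschke_degree :: "(quat \<times> nat) list \<Rightarrow> quat list list \<Rightarrow> nat" where
  "blaschke_degree cms als = (\<Sum>cm\<leftarrow>cms. 2 * snd cm) + (\<Sum>al\<leftarrow>als. length al)"

definition kernelB :: "(nat \<Rightarrow> quat) \<Rightarrow> quat \<Rightarrow> quat \<Rightarrow> quat" where
  "kernelB b p q = (\<Sum>n. qmul (qmul (qpow p n) (qreal 1 - qmul (qeval b p) (qcnj (qeval b q))))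
                              (qcnj (qpow q n)))"

text \<open>Right linear span of the kernel functions p \<mapsto> K(p,q) a (q in the ball);
  functions are considered on the ball only.\<close>
definition kernel_span :: "(quat \<Rightarrow> quat \<Rightarrow> quat) \<Rightarrow> (quat \<Rightarrow> quat) set" where
  "kernel_span K = {f. \<exists>(N::nat) qs as. (\<forall>i<N. qs i \<in> qball) \<and>
       (\<forall>p\<in>qball. f p = (\<Sum>i<N. qmul (K p (qs i)) (as i)))}"

definition rdim_eq :: "(quat \<Rightarrow> quat) set \<Rightarrow> nat \<Rightarrow> bool" where
  "rdim_eq V d \<longleftrightarrow> (\<exists>fs :: nat \<Rightarrow> quat \<Rightarrow> quat.
      (\<forall>i<d. fs i \<in> V) \<and>
      (\<forall>a. (\<forall>p\<in>qball. (\<Sum>i<d. qmul (fs i p) (a i)) = 0) \<longrightarrow> (\<forall>i<d. a i = 0)) \<and>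
      (\<forall>f\<in>V. \<exists>a. \<forall>p\<in>qball. f p = (\<Sum>i<d. qmul (fs i p) (a i))))"

end

theory Submission
  imports Defs "HOL-Computational_Algebra.Formal_Power_Series"
begin

unbundle no vec_syntax
unbundle fps_syntax


typedef hq = "UNIV :: (complex \<times> complex) set" by simp


lemma hq_eq_iff: "x = y \<longleftrightarrow> Rep_hq x = Rep_hq y" by (simp add: Rep_hq_inject)

lemma qmul_assoc: "qmul (qmul x y) z = qmul x (qmul y z)"
  by (simp add: qmul_def prod_eq_iff algebra_simps)

lemma qnorm_sq: "(norm (x::complex\<times>complex))\<^sup>2 = (cmod (fst x))\<^sup>2 + (cmod (snd x))\<^sup>2"
  by (cases x) (simp add: norm_Pair)

lemma qnorm_sq': "(norm (x::complex\<times>complex))\<^sup>2 = (Re (fst x))\<^sup>2 + (Im (fst x))\<^sup>2 + (Re (snd x))\<^sup>2 + (Im (snd x))\<^sup>2"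
  by (simp add: qnorm_sq cmod_power2)

lemma qmul_norm: "norm (qmul x y) = norm x * norm y"
proof -
  have "(norm (qmul x y))\<^sup>2 = (norm x * norm y)\<^sup>2"
    unfolding power_mult_distrib qnorm_sq'
    by (simp add: qmul_def power2_eq_square algebra_simps)
  then show ?thesis by (simp add: power2_eq_iff_nonneg)
qed

instantiation hq :: real_div_algebra
begin
definition "0 = Abs_hq 0"
definition "1 = Abs_hq (1,0)"
definition "x + y = Abs_hq (Rep_hq x + Rep_hq y)"
definition "x - y = Abs_hq (Rep_hq x - Rep_hq y)"
definition "- x = Abs_hq (- Rep_hq x)"
definition "x * y = Abs_hq (qmul (Rep_hq x) (Rep_hq y))"
definition "inverse x = Abs_hq ((1 / (norm (Rep_hq x))\<^sup>2) *\<^sub>R qcnj (Rep_hq x))"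
definition "x div (y::hq) = x * inverse y"
definition "scaleR r x = Abs_hq (r *\<^sub>R Rep_hq x)"

lemma Rep_simps[simp]:
  "Rep_hq 0 = 0" "Rep_hq 1 = (1,0)" "Rep_hq (x + y) = Rep_hq x + Rep_hq y"
  "Rep_hq (x - y) = Rep_hq x - Rep_hq y" "Rep_hq (- x) = - Rep_hq x"
  "Rep_hq (x * y) = qmul (Rep_hq x) (Rep_hq y)"
  "Rep_hq (scaleR r x) = r *\<^sub>R Rep_hq x"
  "Rep_hq (inverse x) = (1 / (norm (Rep_hq x))\<^sup>2) *\<^sub>R qcnj (Rep_hq x)"
  by (simp_all add: zero_hq_def one_hq_def plus_hq_def minus_hq_def uminus_hq_def times_hq_def
     scaleR_hq_def inverse_hq_def Abs_hq_inverse)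

instance
proof
  fix x y z :: hq and a b :: real and S :: "hq set"
  show "x + y + z = x + (y + z)" by (simp add: hq_eq_iff)
  show "x + y = y + x" by (simp add: hq_eq_iff)
  show "0 + x = x" by (simp add: hq_eq_iff)
  show "- x + x = 0" by (simp add: hq_eq_iff)
  show "x - y = x + - y" by (simp add: hq_eq_iff)
  show "a *\<^sub>R (x + y) = a *\<^sub>R x + a *\<^sub>R y" by (simp add: hq_eq_iff scaleR_right_distrib)
  show "(a + b) *\<^sub>R x = a *\<^sub>R x + b *\<^sub>R x" by (simp add: hq_eq_iff scaleR_left_distrib)
  show "a *\<^sub>R b *\<^sub>R x = (a * b) *\<^sub>R x" by (simp add: hq_eq_iff)
  show "1 *\<^sub>R x = x" by (simp add: hq_eq_iff)
  show "x * y * z = x * (y * z)" by (simp add: hq_eq_iff qmul_assoc)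
  show "(x + y) * z = x * z + y * z" by (simp add: hq_eq_iff qmul_def prod_eq_iff algebra_simps)
  show "x * (y + z) = x * y + x * z" by (simp add: hq_eq_iff qmul_def prod_eq_iff algebra_simps)
  show "a *\<^sub>R x * y = a *\<^sub>R (x * y)" by (simp add: hq_eq_iff qmul_def prod_eq_iff algebra_simps scaleR_conv_of_real)
  show "x * a *\<^sub>R y = a *\<^sub>R (x * y)" by (simp add: hq_eq_iff qmul_def prod_eq_iff algebra_simps scaleR_conv_of_real)
  show "1 * x = x" by (simp add: hq_eq_iff qmul_def prod_eq_iff)
  show "x * 1 = x" by (simp add: hq_eq_iff qmul_def prod_eq_iff)
  show "(0::hq) \<noteq> 1" by (simp add: hq_eq_iff zero_prod_def)
  show "x div y = x * inverse y" by (simp add: divide_hq_def)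
  show "inverse (0::hq) = 0" by (simp add: hq_eq_iff qcnj_def zero_prod_def)
  show "x \<noteq> 0 \<Longrightarrow> inverse x * x = 1"
  proof -
    assume "x \<noteq> 0"
    then obtain z w where zw: "Rep_hq x = (z,w)" "(z,w) \<noteq> 0" by (metis Rep_simps(1) hq_eq_iff prod.exhaust)
    then have n: "(cmod z)\<^sup>2 + (cmod w)\<^sup>2 \<noteq> 0" by (auto simp: zero_prod_def add_nonneg_eq_0_iff)
    have e: "z * cnj z + w * cnj w = complex_of_real ((cmod z)\<^sup>2 + (cmod w)\<^sup>2)"
      by (simp only: of_real_add complex_norm_square)
    have e2: "cnj z * z + cnj w * w = complex_of_real ((cmod z)\<^sup>2 + (cmod w)\<^sup>2)"
      by (simp only: of_real_add complex_norm_square mult.commute)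
    show ?thesis using n e e2
      by (simp add: hq_eq_iff zw qmul_def qcnj_def scaleR_conv_of_real norm_Pair
        field_simps of_real_add[symmetric] del: of_real_add)
  qed
  show "x \<noteq> 0 \<Longrightarrow> x * inverse x = 1"
  proof -
    assume "x \<noteq> 0"
    then obtain z w where zw: "Rep_hq x = (z,w)" "(z,w) \<noteq> 0" by (metis Rep_simps(1) hq_eq_iff prod.exhaust)
    then have n: "(cmod z)\<^sup>2 + (cmod w)\<^sup>2 \<noteq> 0" by (auto simp: zero_prod_def add_nonneg_eq_0_iff)
    have e: "z * cnj z + w * cnj w = complex_of_real ((cmod z)\<^sup>2 + (cmod w)\<^sup>2)"
      by (simp only: of_real_add complex_norm_square)
    show ?thesis using n e
      by (simp add: hq_eq_iff zw qmul_def qcnj_def scaleR_conv_of_real norm_Pair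
        field_simps of_real_add[symmetric] del: of_real_add)
  qed
qed
end

instantiation hq :: real_normed_div_algebra
begin
definition "norm x = norm (Rep_hq x)"
definition "sgn (x::hq) = x /\<^sub>R norm x"
definition "dist (x::hq) y = norm (x - y)"
definition "(uniformity :: (hq \<times> hq) filter) = (INF e\<in>{0 <..}. principal {(x, y). dist x y < e})"
definition "open (U :: hq set) \<longleftrightarrow> (\<forall>x\<in>U. eventually (\<lambda>(x', y). x' = x \<longrightarrow> y \<in> U) uniformity)"
instance
proof
  fix x y z :: hq and a b :: real and S :: "hq set"
  show "sgn x = x /\<^sub>R norm x" by (simp add: sgn_hq_def)
  show "dist x y = norm (x - y)" by (simp add: dist_hq_def)
  show "uniformity = (INF e\<in>{0<..}. principal {(x, y::hq). dist x y < e})" by (simp add: uniformity_hq_def)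
  show "open S = (\<forall>x\<in>S. \<forall>\<^sub>F (x', y) in uniformity. x' = x \<longrightarrow> y \<in> S)" by (simp add: open_hq_def)
  show "(norm x = 0) = (x = 0)" by (simp add: norm_hq_def hq_eq_iff)
  show "norm (x + y) \<le> norm x + norm y" by (simp add: norm_hq_def norm_triangle_ineq)
  show "norm (a *\<^sub>R x) = \<bar>a\<bar> * norm x" by (simp add: norm_hq_def)
  show "norm (x * y) = norm x * norm y" by (simp add: norm_hq_def qmul_norm)
qed
end


lemma dist_hq_Rep: "dist x y = dist (Rep_hq x) (Rep_hq y)"
  by (simp add: dist_hq_def norm_hq_def dist_norm)

instance hq :: banach
proof
  fix X :: "nat \<Rightarrow> hq" assume "Cauchy X"
  then have "Cauchy (\<lambda>n. Rep_hq (X n))" by (simp add: Cauchy_def dist_hq_Rep)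
  then obtain L where "(\<lambda>n. Rep_hq (X n)) \<longlonglongrightarrow> L" using Cauchy_convergent_iff convergent_def by blast
  then have "X \<longlonglongrightarrow> Abs_hq L"
    unfolding lim_sequentially dist_hq_Rep by (simp add: Abs_hq_inverse)
  then show "convergent X" by (auto simp: convergent_def)
qed



definition hcnj :: "hq \<Rightarrow> hq" where "hcnj x = Abs_hq (qcnj (Rep_hq x))"

lemma Rep_hcnj[simp]: "Rep_hq (hcnj x) = qcnj (Rep_hq x)"
  by (simp add: hcnj_def Abs_hq_inverse)

lemma Rep_of_real[simp]: "Rep_hq (of_real r) = (complex_of_real r, 0)"
  by (simp add: of_real_def)

lemma norm_Rep: "norm (Rep_hq x) = norm x" by (simp add: norm_hq_def)

lemma hcnj_mult: "hcnj (x * y) = hcnj y * hcnj x"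
  by (simp add: hq_eq_iff qmul_def qcnj_def algebra_simps)
lemma hcnj_add[simp]: "hcnj (x + y) = hcnj x + hcnj y"
  by (simp add: hq_eq_iff qcnj_def)
lemma hcnj_diff[simp]: "hcnj (x - y) = hcnj x - hcnj y"
  by (simp add: hq_eq_iff qcnj_def)
lemma hcnj_minus[simp]: "hcnj (- x) = - hcnj x"
  by (simp add: hq_eq_iff qcnj_def)
lemma hcnj_hcnj[simp]: "hcnj (hcnj x) = x"
  by (simp add: hq_eq_iff qcnj_def)
lemma hcnj_of_real[simp]: "hcnj (of_real r) = of_real r"
  by (simp add: hq_eq_iff qcnj_def)
lemma hcnj_zero[simp]: "hcnj 0 = 0"
  by (simp add: hq_eq_iff qcnj_def zero_prod_def)
lemma hcnj_one[simp]: "hcnj 1 = 1"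
  by (simp add: hq_eq_iff qcnj_def)
lemma hcnj_scaleR[simp]: "hcnj (r *\<^sub>R x) = r *\<^sub>R hcnj x"
  by (simp add: hq_eq_iff qcnj_def)
lemma norm_hcnj[simp]: "norm (hcnj x) = norm x"
  by (cases "Rep_hq x") (simp add: norm_hq_def qcnj_def norm_Pair)
lemma hcnj_eq_0_iff[simp]: "hcnj x = 0 \<longleftrightarrow> x = 0"
  by (metis hcnj_hcnj hcnj_zero)
lemma hcnj_power: "hcnj (x ^ n) = (hcnj x) ^ n"
proof (induction n)
  case (Suc n)
  have "x ^ Suc n = x ^ n * x" by (simp add: power_commutes)
  then show ?case using Suc by (simp add: hcnj_mult)
qed simp
lemma hcnj_sum: "hcnj (sum f A) = sum (\<lambda>i. hcnj (f i)) A"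
  by (induction A rule: infinite_finite_induct) auto

lemma mult_hcnj: "x * hcnj x = of_real ((norm x)\<^sup>2)"
proof -
  obtain z w where zw: "Rep_hq x = (z,w)" by (cases "Rep_hq x")
  have e: "z * cnj z + w * cnj w = complex_of_real ((cmod z)\<^sup>2 + (cmod w)\<^sup>2)"
    by (simp only: of_real_add complex_norm_square)
  have n: "(norm x)\<^sup>2 = (cmod z)\<^sup>2 + (cmod w)\<^sup>2"
    by (simp add: norm_hq_def zw norm_Pair)
  show ?thesis unfolding n using e
    by (simp add: hq_eq_iff zw qmul_def qcnj_def del: of_real_add of_real_power)
qed
lemma hcnj_mult_self: "hcnj x * x = of_real ((norm x)\<^sup>2)"
  by (metis hcnj_hcnj mult_hcnj norm_hcnj)

lemma bounded_linear_hcnj: "bounded_linear hcnj"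
  by (rule bounded_linear_intro[where K=1]) (auto simp: hq_eq_iff qcnj_def)

lemma of_real_commute: "of_real r * x = x * (of_real r :: hq)"
  by (simp add: of_real_def)


declare Abs_hq_inverse[simplified, simp]

lemma Abs_qmul: "Abs_hq (qmul x y) = Abs_hq x * Abs_hq y" by (simp add: hq_eq_iff)
lemma Abs_add: "Abs_hq (x + y) = Abs_hq x + Abs_hq y" by (simp add: hq_eq_iff)
lemma Abs_zero: "Abs_hq 0 = 0" by (simp add: hq_eq_iff)
lemma Abs_minus: "Abs_hq (- x) = - Abs_hq x" by (simp add: hq_eq_iff)
lemma Abs_diff: "Abs_hq (x - y) = Abs_hq x - Abs_hq y" by (simp add: hq_eq_iff)
lemma Abs_qreal: "Abs_hq (qreal r) = of_real r" by (simp add: hq_eq_iff qreal_def)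
lemma Abs_qcnj: "Abs_hq (qcnj x) = hcnj (Abs_hq x)" by (simp add: hq_eq_iff)
lemma Abs_scaleR: "Abs_hq (r *\<^sub>R x) = r *\<^sub>R Abs_hq x" by (simp add: hq_eq_iff)
lemma norm_Abs: "norm (Abs_hq x) = norm x" by (simp add: norm_hq_def)
lemma Abs_sum: "Abs_hq (sum f A) = (\<Sum>i\<in>A. Abs_hq (f i))"
  by (induction A rule: infinite_finite_induct) (auto simp: Abs_zero Abs_add)
lemma Abs_qpow: "Abs_hq (qpow x n) = (Abs_hq x) ^ n"
  by (induction n) (auto simp: Abs_qmul Abs_qreal)
lemma Rep_sum: "Rep_hq (sum f A) = (\<Sum>i\<in>A. Rep_hq (f i))"
  by (induction A rule: infinite_finite_induct) auto
lemma Abs_eq_0_iff: "Abs_hq x = 0 \<longleftrightarrow> x = 0" by (simp add: hq_eq_iff)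

definition fp :: "(nat \<Rightarrow> quat) \<Rightarrow> hq fps" where "fp s = Abs_fps (\<lambda>n. Abs_hq (s n))"

lemma fp_nth[simp]: "fp s $ n = Abs_hq (s n)" by (simp add: fp_def)

lemma fp_inj: "fp a = fp b \<Longrightarrow> a = b"
  by (auto simp: fps_eq_iff Abs_hq_inject)

lemma fp_cstar: "fp (cstar a b) = fp a * fp b"
  by (rule fps_ext) (simp add: cstar_def fps_mult_nth Abs_sum Abs_qmul atLeast0AtMost)

lemma fp_qunit: "fp qunit = 1"
  by (rule fps_ext) (simp add: qunit_def Abs_qreal Abs_zero)

lemma fp_cpow: "fp (cpow a m) = fp a ^ m"
  by (induction m) (auto simp: fp_qunit fp_cstar)

lemma fp_cscal: "fp (cscal a c) = fp a * fps_const (Abs_hq c)"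
  by (rule fps_ext) (simp add: cscal_def Abs_qmul)

lemma fp_sinv:
  assumes "fp a * G = 1" "G * fp a = 1"
  shows "fp (sinv a) = G"
proof -
  define c0 where "c0 = (\<lambda>n. Rep_hq (G $ n))"
  have fc0: "fp c0 = G" by (rule fps_ext) (simp add: c0_def Rep_hq_inverse)
  have P: "cstar a c0 = qunit \<and> cstar c0 a = qunit"
    by (intro conjI; rule fp_inj) (simp_all add: fp_cstar fp_qunit fc0 assms)
  have U: "c = c0" if "cstar a c = qunit \<and> cstar c a = qunit" for c
  proof -
    have 1: "fp a * fp c = 1" "fp c * fp a = 1"
      using that by (metis fp_cstar fp_qunit)+
    have "fp c = fp c * (fp a * G)" using assms by simp
    also have "\<dots> = G" using 1 by (simp add: mult.assoc[symmetric])
    finally show ?thesis using fc0 by (auto intro: fp_inj)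
  qed
  have "sinv a = c0" unfolding sinv_def using P U by (rule the_equality)
  then show ?thesis using fc0 by simp
qed

lemma fp_cpoly2: "fp (cpoly [x, y]) = fps_const (Abs_hq x) + fps_X * fps_const (Abs_hq y)"
  by (rule fps_ext) (auto simp: cpoly_def Abs_zero less_Suc_eq nth_Cons split: nat.splits)

lemma fp_cpoly3: "fp (cpoly [x, y, z]) = fps_const (Abs_hq x) + fps_X * fps_const (Abs_hq y)
    + fps_X ^ 2 * fps_const (Abs_hq z)"
  by (rule fps_ext) (auto simp: cpoly_def Abs_zero less_Suc_eq nth_Cons fps_X_power_mult_nth split: nat.splits)

definition Einv :: "hq \<Rightarrow> hq fps" where "Einv t = Abs_fps (\<lambda>n. t ^ n)"
definition D1 :: "hq \<Rightarrow> hq fps" where "D1 t = 1 - fps_X * fps_const t"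

lemma D1_Einv: "D1 t * Einv t = 1"
proof (rule fps_ext)
  fix n
  have "(D1 t * Einv t) $ n = Einv t $ n - (fps_X * (fps_const t * Einv t)) $ n"
    by (simp add: D1_def ring_distribs mult.assoc)
  also have "\<dots> = (if n = 0 then 1 else 0)"
    by (cases n) (auto simp: Einv_def)
  finally show "(D1 t * Einv t) $ n = 1 $ n" by simp
qed

lemma Einv_D1: "Einv t * D1 t = 1"
proof (rule fps_ext)
  fix n
  have "(Einv t * D1 t) $ n = Einv t $ n - (fps_X * (Einv t * fps_const t)) $ n"
    by (simp add: D1_def ring_distribs mult.assoc[symmetric] fps_mult_fps_X_commute)
  also have "\<dots> = (if n = 0 then 1 else 0)"
    by (cases n) (auto simp: Einv_def power_commutes)
  finally show "(Einv t * D1 t) $ n = 1 $ n" by simp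
qed

definition hnorm2 :: "hq \<Rightarrow> hq" where "hnorm2 a = of_real ((norm a)\<^sup>2)"

definition beta :: "hq \<Rightarrow> nat \<Rightarrow> hq" where
  "beta a n = (if n = 0 then of_real (norm a) else - of_real ((1 - (norm a)\<^sup>2) / norm a) * (hcnj a) ^ n)"

definition blf :: "hq \<Rightarrow> hq fps" where "blf a = Abs_fps (beta a)"

lemma of_real_commute': "x * of_real r = of_real r * (x::hq)"
  by (simp add: of_real_commute)

lemma blf_eq:
  assumes "a \<noteq> 0"
  shows "blf a = Einv (hcnj a) * (fps_const a - fps_X) * fps_const ((1 / norm a) *\<^sub>R hcnj a)"
proof (rule fps_ext)
  fix n
  let ?t = "hcnj a"
  have na: "norm a \<noteq> 0" using assms by simp
  have "(Einv ?t * (fps_const a - fps_X) * fps_const ((1 / norm a) *\<^sub>R ?t)) $ n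
      = ((Einv ?t * fps_const a) $ n - (Einv ?t * fps_X) $ n) * ((1 / norm a) *\<^sub>R ?t)"
    by (simp add: ring_distribs scaleR_right_diff_distrib)
  also have "\<dots> = beta a n"
  proof (cases n)
    case 0
    then show ?thesis using na
      by (simp add: Einv_def beta_def mult_hcnj power2_eq_square of_real_def)
  next
    case (Suc m)
    have "((Einv ?t * fps_const a) $ n - (Einv ?t * fps_X) $ n) * ((1 / norm a) *\<^sub>R ?t)
        = (1 / norm a) *\<^sub>R (?t ^ n * (a * ?t) - ?t ^ m * ?t)"
      using Suc by (simp add: Einv_def algebra_simps)
    also have "\<dots> = (1 / norm a) *\<^sub>R (?t ^ n * of_real ((norm a)\<^sup>2) - ?t ^ n)"
      using Suc by (simp add: mult_hcnj power_Suc2 power_commutes mult.assoc)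
    also have "\<dots> = beta a n"
      using Suc na by (simp add: beta_def of_real_def algebra_simps power2_eq_square diff_divide_distrib)
    finally show ?thesis .
  qed
  finally show "blf a $ n = (Einv ?t * (fps_const a - fps_X) * fps_const ((1 / norm a) *\<^sub>R ?t)) $ n"
    by (simp add: blf_def)
qed

lemma fp_blaschke:
  assumes "a \<noteq> 0"
  shows "fp (blaschke a) = blf (Abs_hq a)"
proof -
  have a: "Abs_hq a \<noteq> 0" using assms by (simp add: Abs_eq_0_iff)
  have 1: "fp (cpoly [qreal 1, - qcnj a]) = D1 (hcnj (Abs_hq a))"
    by (simp add: fp_cpoly2 Abs_qreal Abs_minus Abs_qcnj D1_def fps_const_neg[symmetric] del: fps_const_neg)
  have 2: "fp (sinv (cpoly [qreal 1, - qcnj a])) = Einv (hcnj (Abs_hq a))"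
    by (rule fp_sinv) (simp_all add: 1 D1_Einv Einv_D1)
  have 3: "fp (cpoly [a, - qreal 1]) = fps_const (Abs_hq a) - fps_X"
    by (simp add: fp_cpoly2 Abs_qreal Abs_minus fps_const_neg[symmetric] del: fps_const_neg)
  show ?thesis
    unfolding blaschke_def fp_cscal fp_cstar 2 3 blf_eq[OF a]
    by (simp add: Abs_scaleR Abs_qcnj norm_Abs)
qed


definition hre :: "hq \<Rightarrow> real" where "hre a = Re (fst (Rep_hq a))"

lemma add_hcnj: "a + hcnj a = of_real (2 * hre a)"
proof -
  obtain z w where zw: "Rep_hq a = (z, w)" by (cases "Rep_hq a")
  show ?thesis by (simp add: hq_eq_iff qcnj_def hre_def complex_add_cnj zw del: of_real_mult)
qed

lemma hcnj_add': "hcnj a + a = of_real (2 * hre a)"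
  using add_hcnj[of a] by (simp add: add.commute del: of_real_mult)

lemma hre_Abs: "hre (Abs_hq x) = qre x" by (simp add: hre_def qre_def)

lemma hcnj_eq_re: "hcnj a = (2 * hre a) *\<^sub>R 1 - a"
  using add_hcnj[of a] unfolding of_real_def by (simp add: algebra_simps del: of_real_mult)

lemma sq_slice: "a * a = (2 * hre a) *\<^sub>R a - (norm a)\<^sup>2 *\<^sub>R 1"
proof -
  have "a * hcnj a = (2 * hre a) *\<^sub>R a - a * a"
    unfolding hcnj_eq_re by (simp add: right_diff_distrib)
  then show ?thesis unfolding mult_hcnj of_real_def by (simp add: algebra_simps)
qed

definition inslice :: "hq \<Rightarrow> hq \<Rightarrow> bool" where
  "inslice c x \<longleftrightarrow> (\<exists>\<alpha> \<beta>. x = \<alpha> *\<^sub>R 1 + \<beta> *\<^sub>R c)"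

lemma inslice_of_real[simp]: "inslice c (of_real r)"
  unfolding inslice_def of_real_def by (rule exI[of _ r], rule exI[of _ 0]) simp
lemma inslice_zero[simp]: "inslice c 0"
  using inslice_of_real[of c 0] by simp
lemma inslice_one[simp]: "inslice c 1"
  using inslice_of_real[of c 1] by simp
lemma inslice_self[simp]: "inslice c c"
  unfolding inslice_def by (rule exI[of _ 0], rule exI[of _ 1]) simp
lemma inslice_add[simp]: "inslice c x \<Longrightarrow> inslice c y \<Longrightarrow> inslice c (x + y)"
proof -
  assume "inslice c x" "inslice c y"
  then obtain a b a' b' where "x = a *\<^sub>R 1 + b *\<^sub>R c" "y = a' *\<^sub>R 1 + b' *\<^sub>R c" unfolding inslice_def by blast
  then have "x + y = (a + a') *\<^sub>R 1 + (b + b') *\<^sub>R c" by (simp add: scaleR_left_distrib)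
  then show ?thesis unfolding inslice_def by blast
qed
lemma inslice_uminus[simp]: "inslice c x \<Longrightarrow> inslice c (- x)"
proof -
  assume "inslice c x"
  then obtain a b where "x = a *\<^sub>R 1 + b *\<^sub>R c" unfolding inslice_def by blast
  then have "- x = (- a) *\<^sub>R 1 + (- b) *\<^sub>R c" by simp
  then show ?thesis unfolding inslice_def by blast
qed
lemma inslice_diff[simp]: "inslice c x \<Longrightarrow> inslice c y \<Longrightarrow> inslice c (x - y)"
  by (metis inslice_add inslice_uminus diff_conv_add_uminus)
lemma inslice_scaleR[simp]: "inslice c x \<Longrightarrow> inslice c (r *\<^sub>R x)"
proof -
  assume "inslice c x"
  then obtain a b where "x = a *\<^sub>R 1 + b *\<^sub>R c" unfolding inslice_def by blast
  then have "r *\<^sub>R x = (r * a) *\<^sub>R 1 + (r * b) *\<^sub>R c" by (simp add: scaleR_right_distrib)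
  then show ?thesis unfolding inslice_def by blast
qed
lemma inslice_mult[simp]:
  assumes "inslice c x" "inslice c y" shows "inslice c (x * y)"
proof -
  obtain a b where x: "x = a *\<^sub>R 1 + b *\<^sub>R c" using assms(1) inslice_def by auto
  obtain a' b' where y: "y = a' *\<^sub>R 1 + b' *\<^sub>R c" using assms(2) inslice_def by auto
  have "x * y = (a * a') *\<^sub>R 1 + (a * b' + b * a') *\<^sub>R c + (b * b') *\<^sub>R (c * c)"
    unfolding x y by (simp add: algebra_simps)
  also have "\<dots> = (a * a' - b * b' * (norm c)\<^sup>2) *\<^sub>R 1 + (a * b' + b * a' + b * b' * (2 * hre c)) *\<^sub>R c"
    unfolding sq_slice by (simp add: algebra_simps)
  finally show ?thesis unfolding inslice_def by blast
qed
lemma inslice_hcnj[simp]: "inslice c x \<Longrightarrow> inslice c (hcnj x)"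
proof -
  assume "inslice c x"
  then obtain a b where x: "x = a *\<^sub>R 1 + b *\<^sub>R c" using inslice_def by auto
  have "hcnj x = a *\<^sub>R 1 + b *\<^sub>R ((2 * hre c) *\<^sub>R 1 - c)"
    unfolding x by (simp add: hcnj_eq_re[of c])
  also have "\<dots> = (a + 2 * b * hre c) *\<^sub>R 1 + (- b) *\<^sub>R c"
    by (simp add: algebra_simps)
  finally show ?thesis unfolding inslice_def by blast
qed
lemma inslice_power[simp]: "inslice c x \<Longrightarrow> inslice c (x ^ n)"
  by (induction n) auto
lemma inslice_sum[simp]: "(\<And>i. i \<in> A \<Longrightarrow> inslice c (f i)) \<Longrightarrow> inslice c (sum f A)"
  by (induction A rule: infinite_finite_induct) auto
lemma inslice_commute:
  assumes "inslice c x" "inslice c y" shows "x * y = y * x"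
proof -
  obtain a b where x: "x = a *\<^sub>R 1 + b *\<^sub>R c" using assms(1) inslice_def by auto
  obtain a' b' where y: "y = a' *\<^sub>R 1 + b' *\<^sub>R c" using assms(2) inslice_def by auto
  show ?thesis unfolding x y by (simp add: algebra_simps)
qed

definition fslice :: "hq \<Rightarrow> hq fps \<Rightarrow> bool" where "fslice c f \<longleftrightarrow> (\<forall>n. inslice c (f $ n))"

lemma fslice_mult[simp]: "fslice c f \<Longrightarrow> fslice c g \<Longrightarrow> fslice c (f * g)"
  by (auto simp: fslice_def fps_mult_nth)
lemma fslice_add[simp]: "fslice c f \<Longrightarrow> fslice c g \<Longrightarrow> fslice c (f + g)"
  by (auto simp: fslice_def)
lemma fslice_diff[simp]: "fslice c f \<Longrightarrow> fslice c g \<Longrightarrow> fslice c (f - g)"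
  by (auto simp: fslice_def)
lemma fslice_const[simp]: "inslice c x \<Longrightarrow> fslice c (fps_const x)"
  by (auto simp: fslice_def)
lemma fslice_X[simp]: "fslice c fps_X"
  by (auto simp: fslice_def)
lemma fslice_one[simp]: "fslice c 1"
  by (auto simp: fslice_def)
lemma fslice_Einv[simp]: "inslice c t \<Longrightarrow> fslice c (Einv t)"
  by (auto simp: fslice_def Einv_def)

lemma fps_commute:
  assumes "\<And>i j. f $ i * g $ j = g $ j * f $ i"
  shows "f * g = g * f"
proof (rule fps_ext)
  fix n :: nat
  have "(\<Sum>i=0..n. f$i * g$(n - i)) = (\<Sum>i=0..n. f$(n - i) * g$i)"
    by (rule fps_mult_commute_lemma)
  then show "(f * g) $ n = (g * f) $ n"
    by (simp add: fps_mult_nth assms)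
qed

lemma fslice_commute: "fslice c f \<Longrightarrow> fslice c g \<Longrightarrow> f * g = g * f"
  by (rule fps_commute) (auto simp: fslice_def intro: inslice_commute)


lemma fps_const_X_commute: "fps_const (a::hq) * (fps_X * g) = fps_X * (fps_const a * g)"
  by (simp only: mult.assoc[symmetric] fps_mult_fps_X_commute[of "fps_const a"])

lemma T1: "D1 t * D1 c = 1 - fps_X * fps_const t - fps_X * fps_const c + (fps_X * fps_const t) * (fps_X * fps_const c)"
    unfolding D1_def by (simp add: ring_distribs)

lemma T2: "(fps_X * fps_const (t::hq)) * (fps_X * fps_const c) = fps_X * (fps_X * fps_const (t * c))"
proof -
  have "(fps_X * fps_const t) * (fps_X * fps_const c) = fps_X * (fps_const t * (fps_X * fps_const c))"
    by (simp only: mult.assoc)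
  also have "\<dots> = fps_X * (fps_X * (fps_const t * fps_const c))"
    by (simp only: fps_const_X_commute)
  finally show ?thesis by (simp only: fps_const_mult)
qed


lemma D1D1: "D1 t * D1 c = 1 + fps_X * fps_const (- (t + c)) + fps_X * (fps_X * fps_const (t * c))"
  by (rule fps_ext) (simp add: T1 T2)

lemma fp_cpoly3': "fp (cpoly [x, y, z]) = fps_const (Abs_hq x) + fps_X * fps_const (Abs_hq y)
    + fps_X * (fps_X * fps_const (Abs_hq z))"
  by (simp add: fp_cpoly3 power2_eq_square mult.assoc)

lemma NN: "(fps_const c - fps_X) * (fps_const t - fps_X) = fps_const (c * t) + fps_X * fps_const (- (c + t)) + fps_X * (fps_X * fps_const (1::hq))"
proof -
  have "(fps_const c - fps_X) * (fps_const t - fps_X) = fps_const c * fps_const t - fps_const c * fps_X - fps_X * fps_const t + fps_X * fps_X"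
    by (simp add: ring_distribs)
  also have "fps_const c * fps_X = fps_X * fps_const c" by (rule fps_mult_fps_X_commute[symmetric])
  finally show ?thesis by (intro fps_ext) simp
qed

lemma fp_blaschke_sph:
  assumes "c \<noteq> 0"
  shows "fp (blaschke_sph c) = blf (Abs_hq c) * blf (hcnj (Abs_hq c))"
proof -
  define c' where "c' = Abs_hq c"
  define t where "t = hcnj c'"
  have c'0: "c' \<noteq> 0" using assms by (simp add: c'_def Abs_eq_0_iff)
  have t0: "t \<noteq> 0" using c'0 by (simp add: t_def)
  have nc: "norm c' = norm c" by (simp add: c'_def norm_Abs)
  have tc: "t * c' = of_real ((norm c)\<^sup>2)" by (simp add: t_def hcnj_mult_self nc)
  have ct: "c' * t = of_real ((norm c)\<^sup>2)" by (simp add: t_def mult_hcnj nc)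
  have tpc: "- (t + c') = of_real (- 2 * qre c)" using hcnj_add'[of c'] by (simp add: t_def c'_def hre_Abs)
  have cpt: "- (c' + t) = of_real (- 2 * qre c)" using add_hcnj[of c'] by (simp add: t_def c'_def hre_Abs)
  have D: "fp (cpoly [qreal 1, qreal (- 2 * qre c), qreal ((norm c)\<^sup>2)]) = D1 t * D1 c'"
    unfolding D1D1 fp_cpoly3' tpc tc by (simp add: Abs_qreal)
  have Dinv: "fp (sinv (cpoly [qreal 1, qreal (- 2 * qre c), qreal ((norm c)\<^sup>2)])) = Einv c' * Einv t"
  proof (rule fp_sinv)
    have "D1 t * D1 c' * (Einv c' * Einv t) = D1 t * (D1 c' * Einv c') * Einv t"
      by (simp only: mult.assoc)
    then show "fp (cpoly [qreal 1, qreal (- 2 * qre c), qreal ((norm c)\<^sup>2)]) * (Einv c' * Einv t) = 1"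
      unfolding D by (simp add: D1_Einv)
    have "Einv c' * Einv t * (D1 t * D1 c') = Einv c' * (Einv t * D1 t) * D1 c'"
      by (simp only: mult.assoc)
    then show "Einv c' * Einv t * fp (cpoly [qreal 1, qreal (- 2 * qre c), qreal ((norm c)\<^sup>2)]) = 1"
      unfolding D by (simp add: Einv_D1)
  qed
  have N: "fp (cpoly [qreal ((norm c)\<^sup>2), qreal (- 2 * qre c), qreal 1]) = (fps_const c' - fps_X) * (fps_const t - fps_X)"
    unfolding NN fp_cpoly3' cpt ct by (simp add: Abs_qreal)
  define A where "A = Einv t"
  define B where "B = fps_const c' - fps_X"
  define K1 where "K1 = fps_const ((1 / norm c') *\<^sub>R hcnj c')"
  define C where "C = Einv c'"
  define Dd where "Dd = fps_const t - fps_X"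
  define K2 where "K2 = fps_const ((1 / norm t) *\<^sub>R hcnj t)"
  have sl: "fslice c' A" "fslice c' B" "fslice c' K1" "fslice c' C" "fslice c' Dd" "fslice c' K2"
    by (simp_all add: A_def B_def K1_def C_def Dd_def K2_def t_def)
  have K: "K1 * K2 = 1"
  proof -
    have "((1 / norm c') *\<^sub>R hcnj c') * ((1 / norm t) *\<^sub>R hcnj t) = 1"
      using c'0 by (simp add: t_def hcnj_mult_self of_real_def power2_eq_square)
    then show ?thesis by (simp add: K1_def K2_def)
  qed
  have bc: "blf c' = A * B * K1" using blf_eq[OF c'0] by (simp add: A_def B_def K1_def t_def)
  have bt: "blf t = C * Dd * K2" using blf_eq[OF t0] by (simp add: C_def Dd_def K2_def t_def)
  have c1: "K1 * C = C * K1" by (rule fslice_commute[OF sl(3) sl(4)])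
  have c2: "K1 * Dd = Dd * K1" by (rule fslice_commute[OF sl(3) sl(5)])
  have c3: "B * C = C * B" by (rule fslice_commute[OF sl(2) sl(4)])
  have c4: "A * C = C * A" by (rule fslice_commute[OF sl(1) sl(4)])
  have "blf c' * blf t = A * B * (K1 * C) * Dd * K2" by (simp only: bc bt mult.assoc)
  also have "\<dots> = A * B * C * (K1 * Dd) * K2" by (simp only: c1 mult.assoc)
  also have "\<dots> = A * (B * C) * Dd * (K1 * K2)" by (simp only: c2 mult.assoc)
  also have "\<dots> = A * (C * B) * Dd" by (simp only: c3 K mult_1_right)
  also have "\<dots> = (A * C) * (B * Dd)" by (simp only: mult.assoc)
  also have "\<dots> = C * A * (B * Dd)" by (simp only: c4)
  finally have R: "blf c' * blf t = C * A * (B * Dd)" .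
  show ?thesis
    unfolding blaschke_sph_def fp_cstar Dinv N using R by (simp add: c'_def[symmetric] t_def[symmetric] A_def B_def C_def Dd_def)
qed


definition BP :: "hq list \<Rightarrow> hq fps" where "BP L = foldr (\<lambda>a acc. blf a * acc) L 1"

lemma BP_Nil[simp]: "BP [] = 1" by (simp add: BP_def)
lemma BP_Cons[simp]: "BP (a # L) = blf a * BP L" by (simp add: BP_def)
lemma BP_append: "BP (L1 @ L2) = BP L1 * BP L2"
  by (induction L1) (auto simp: mult.assoc)
lemma BP_rep: "BP (concat (replicate m [x, y])) = (blf x * blf y) ^ m"
  by (induction m) (auto simp: BP_append mult.assoc)

definition flatL :: "(quat \<times> nat) list \<Rightarrow> quat list list \<Rightarrow> hq list" where
  "flatL cms als = concat (map (\<lambda>(c, m). concat (replicate m [Abs_hq c, hcnj (Abs_hq c)])) cms)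
     @ map Abs_hq (concat als)"

lemma fp_foldr1:
  assumes "\<forall>a\<in>set xs. a \<noteq> 0"
  shows "fp (foldr (\<lambda>a acc. cstar (blaschke a) acc) xs qunit) = BP (map Abs_hq xs)"
  using assms by (induction xs) (auto simp: fp_qunit fp_cstar fp_blaschke)

lemma fp_foldr2:
  assumes "\<forall>cm\<in>set cms. fst cm \<noteq> 0"
  shows "fp (foldr (\<lambda>(c, m) acc. cstar (cpow (blaschke_sph c) m) acc) cms qunit)
     = BP (concat (map (\<lambda>(c, m). concat (replicate m [Abs_hq c, hcnj (Abs_hq c)])) cms))"
  using assms by (induction cms) (auto simp: fp_qunit fp_cstar fp_cpow fp_blaschke_sph BP_append BP_rep)

lemma fp_blaschke_prod:
  assumes "\<forall>cm\<in>set cms. fst cm \<noteq> 0" "\<forall>al\<in>set als. \<forall>a\<in>set al. a \<noteq> 0"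
  shows "fp (blaschke_prod cms als) = BP (flatL cms als)"
  unfolding blaschke_prod_def fp_cstar flatL_def BP_append
  using fp_foldr1[of "concat als"] fp_foldr2[OF assms(1)] assms(2) by auto

lemma length_flatL: "length (flatL cms als) = blaschke_degree cms als"
proof -
  have "length (concat (map (\<lambda>(c, m). concat (replicate m [Abs_hq c, hcnj (Abs_hq c)])) cms))
      = (\<Sum>cm\<leftarrow>cms. 2 * snd cm)"
    by (induction cms) (auto simp: length_concat sum_list_replicate)
  then show ?thesis by (simp add: flatL_def blaschke_degree_def length_concat)
qed

lemma flatL_ball:
  assumes "\<forall>cm\<in>set cms. fst cm \<in> qball - {0}" "\<forall>al\<in>set als. \<forall>a\<in>set al. a \<in> qball - {0}"
  shows "\<forall>a\<in>set (flatL cms als). a \<noteq> 0 \<and> norm a < 1"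
  using assms by (auto simp: flatL_def qball_def norm_Abs Abs_eq_0_iff)


definition l1 :: "(nat \<Rightarrow> hq) \<Rightarrow> bool" where "l1 x \<longleftrightarrow> summable (\<lambda>n. norm (x n))"
definition l1n :: "(nat \<Rightarrow> hq) \<Rightarrow> real" where "l1n x = (\<Sum>n. norm (x n))"
definition ip :: "(nat \<Rightarrow> hq) \<Rightarrow> (nat \<Rightarrow> hq) \<Rightarrow> hq" where "ip x y = (\<Sum>n. hcnj (x n) * y n)"
definition conv :: "(nat \<Rightarrow> hq) \<Rightarrow> (nat \<Rightarrow> hq) \<Rightarrow> nat \<Rightarrow> hq" where
  "conv b x = (\<lambda>n. \<Sum>k\<le>n. b k * x (n - k))"
definition adj :: "(nat \<Rightarrow> hq) \<Rightarrow> (nat \<Rightarrow> hq) \<Rightarrow> nat \<Rightarrow> hq" where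
  "adj b x = (\<lambda>n. \<Sum>k. hcnj (b k) * x (n + k))"

lemma l1_bound: "l1 x \<Longrightarrow> norm (x n) \<le> l1n x"
  unfolding l1_def l1n_def using sum_le_suminf[of "\<lambda>n. norm (x n)" "{n}"] by simp

lemma l1n_nonneg: "l1 x \<Longrightarrow> 0 \<le> l1n x"
  unfolding l1_def l1n_def by (simp add: suminf_nonneg)

lemma summable_norm_prod:
  assumes "l1 x" "l1 y"
  shows "summable (\<lambda>n. norm (x n) * norm (y n))"
proof (rule summable_comparison_test')
  show "summable (\<lambda>n. l1n x * norm (y n))" using assms(2) by (simp add: l1_def summable_mult)
  show "norm (norm (x n) * norm (y n)) \<le> l1n x * norm (y n)" for n
    using l1_bound[OF assms(1), of n] by (simp add: mult_right_mono)
qed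

lemma ip_summable_norm: "l1 x \<Longrightarrow> l1 y \<Longrightarrow> summable (\<lambda>n. norm (hcnj (x n) * y n))"
  unfolding norm_mult norm_hcnj by (rule summable_norm_prod)

lemma ip_summable: "l1 x \<Longrightarrow> l1 y \<Longrightarrow> summable (\<lambda>n. hcnj (x n) * y n)"
  by (rule summable_norm_cancel[OF ip_summable_norm])

lemma hcnj_suminf: "summable f \<Longrightarrow> hcnj (suminf f) = (\<Sum>n. hcnj (f n))"
  by (rule bounded_linear.suminf[OF bounded_linear_hcnj])

lemma hcnj_ip: "l1 x \<Longrightarrow> l1 y \<Longrightarrow> hcnj (ip x y) = ip y x"
  unfolding ip_def by (simp add: hcnj_suminf ip_summable hcnj_mult)

lemma l1_add[simp]: "l1 x \<Longrightarrow> l1 y \<Longrightarrow> l1 (\<lambda>n. x n + y n)"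
  unfolding l1_def by (rule summable_comparison_test'[where g="\<lambda>n. norm (x n) + norm (y n)"])
    (auto intro: summable_add norm_triangle_ineq)
lemma l1_minus[simp]: "l1 x \<Longrightarrow> l1 (\<lambda>n. - x n)"
  unfolding l1_def by simp
lemma l1_diff[simp]: "l1 x \<Longrightarrow> l1 y \<Longrightarrow> l1 (\<lambda>n. x n - y n)"
  using l1_add[of x "\<lambda>n. - y n"] by simp
lemma l1_zero[simp]: "l1 (\<lambda>n. 0)"
  unfolding l1_def by simp
lemma l1_mult_right[simp]: "l1 x \<Longrightarrow> l1 (\<lambda>n. x n * c)"
  unfolding l1_def by (simp add: norm_mult summable_mult2)
lemma l1_mult_left[simp]: "l1 x \<Longrightarrow> l1 (\<lambda>n. c * x n)"
  unfolding l1_def by (simp add: norm_mult summable_mult)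
lemma l1_sum[simp]: "(\<And>j. j \<in> J \<Longrightarrow> l1 (y j)) \<Longrightarrow> l1 (\<lambda>n. \<Sum>j\<in>J. y j n)"
proof (induction J rule: infinite_finite_induct)
  case (insert j J)
  then show ?case using l1_add[of "y j" "\<lambda>n. \<Sum>j\<in>J. y j n"] by simp
qed auto
lemma l1_hcnj[simp]: "l1 x \<Longrightarrow> l1 (\<lambda>n. hcnj (x n))"
  unfolding l1_def by simp

lemma ip_mult_right: "l1 x \<Longrightarrow> l1 y \<Longrightarrow> ip x (\<lambda>n. y n * c) = ip x y * c"
  unfolding ip_def by (simp add: suminf_mult2 ip_summable mult.assoc)
lemma ip_add_right: "l1 x \<Longrightarrow> l1 y \<Longrightarrow> l1 z \<Longrightarrow> ip x (\<lambda>n. y n + z n) = ip x y + ip x z"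
  unfolding ip_def by (simp add: suminf_add ip_summable distrib_left)
lemma ip_diff_right: "l1 x \<Longrightarrow> l1 y \<Longrightarrow> l1 z \<Longrightarrow> ip x (\<lambda>n. y n - z n) = ip x y - ip x z"
  unfolding ip_def by (simp add: suminf_diff ip_summable right_diff_distrib)
lemma ip_sum_right:
  "l1 x \<Longrightarrow> (\<And>j. j \<in> J \<Longrightarrow> l1 (y j)) \<Longrightarrow> ip x (\<lambda>n. \<Sum>j\<in>J. y j n) = (\<Sum>j\<in>J. ip x (y j))"
  unfolding ip_def by (simp add: suminf_sum ip_summable sum_distrib_left)
lemma ip_mult_left: "l1 x \<Longrightarrow> l1 y \<Longrightarrow> ip (\<lambda>n. x n * c) y = hcnj c * ip x y"
  unfolding ip_def by (simp add: suminf_mult ip_summable mult.assoc hcnj_mult)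

lemma l1_conv:
  assumes b: "l1 b" and x: "l1 x"
  shows "l1 (conv b x)"
proof -
  have "(\<lambda>k. \<Sum>i\<le>k. norm (b i) * norm (x (k - i))) sums ((\<Sum>k. norm (b k)) * (\<Sum>k. norm (x k)))"
    by (rule Cauchy_product_sums) (use b x in \<open>simp_all add: l1_def\<close>)
  then have s: "summable (\<lambda>k. \<Sum>i\<le>k. norm (b i) * norm (x (k - i)))" by (rule sums_summable)
  show ?thesis unfolding l1_def
  proof (rule summable_comparison_test'[OF s])
    fix n
    have "norm (conv b x n) \<le> (\<Sum>i\<le>n. norm (b i * x (n - i)))" unfolding conv_def by (rule norm_sum)
    then show "norm (norm (conv b x n)) \<le> (\<Sum>i\<le>n. norm (b i) * norm (x (n - i)))" by (simp add: norm_mult)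
  qed
qed

lemma shift_sum_le:
  assumes "l1 x"
  shows "(\<Sum>n<N. norm (x (n + k))) \<le> l1n x"
proof -
  have "(\<Sum>n<N. norm (x (n + k))) = (\<Sum>m\<in>(\<lambda>n. n + k) ` {..<N}. norm (x m))"
    using sum.reindex[of "\<lambda>n. n + k" "{..<N}" "\<lambda>m. norm (x m)"] by (simp add: inj_on_def o_def)
  also have "\<dots> \<le> l1n x"
    unfolding l1n_def by (rule sum_le_suminf) (use assms in \<open>auto simp: l1_def\<close>)
  finally show ?thesis .
qed

lemma adj_inner_summable_norm:
  assumes b: "l1 b" and x: "l1 x"
  shows "summable (\<lambda>k. norm (b k) * norm (x (n + k)))"
proof (rule summable_comparison_test')
  show "summable (\<lambda>k. norm (b k) * l1n x)" using b by (simp add: l1_def summable_mult2)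
  show "norm (norm (b k) * norm (x (n + k))) \<le> norm (b k) * l1n x" for k
    using l1_bound[OF x, of "n + k"] by (simp add: mult_left_mono)
qed

lemma adj_inner_summable:
  assumes b: "l1 b" and x: "l1 x"
  shows "summable (\<lambda>k. hcnj (b k) * x (n + k))"
  by (rule summable_norm_cancel) (simp add: norm_mult adj_inner_summable_norm[OF b x])

lemma l1_adj:
  assumes b: "l1 b" and x: "l1 x"
  shows "l1 (adj b x)"
proof -
  define s where "s n = (\<Sum>k. norm (b k) * norm (x (n + k)))" for n
  have ns: "norm (adj b x n) \<le> s n" for n
  proof -
    have "norm (adj b x n) \<le> (\<Sum>k. norm (hcnj (b k) * x (n + k)))"
      unfolding adj_def
      by (rule summable_norm) (use adj_inner_summable_norm[OF b x, of n] in \<open>simp add: norm_mult\<close>)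
    then show ?thesis by (simp add: s_def norm_mult)
  qed
  have "summable s"
  proof (rule summableI_nonneg_bounded)
    show "0 \<le> s n" for n unfolding s_def
      by (rule suminf_nonneg) (use adj_inner_summable_norm[OF b x] in auto)
    fix N
    have "sum s {..<N} = (\<Sum>k. \<Sum>n<N. norm (b k) * norm (x (n + k)))"
      unfolding s_def by (rule suminf_sum[symmetric]) (use adj_inner_summable_norm[OF b x] in auto)
    also have "\<dots> \<le> (\<Sum>k. norm (b k) * l1n x)"
    proof (rule suminf_le)
      show "(\<Sum>n<N. norm (b k) * norm (x (n + k))) \<le> norm (b k) * l1n x" for k
        using shift_sum_le[OF x, where N=N and k=k] by (simp add: sum_distrib_left[symmetric] mult_left_mono)
      show "summable (\<lambda>k. \<Sum>n<N. norm (b k) * norm (x (n + k)))"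
        by (rule summable_sum) (use adj_inner_summable_norm[OF b x] in auto)
      show "summable (\<lambda>k. norm (b k) * l1n x)" using b by (simp add: l1_def summable_mult2)
    qed
    finally show "sum s {..<N} \<le> (\<Sum>k. norm (b k) * l1n x)" .
  qed
  then show ?thesis unfolding l1_def
    by (rule summable_comparison_test'[where g=s]) (simp add: ns)
qed


lemma nat_infsum:
  fixes f :: "nat \<Rightarrow> 'a::banach"
  shows "summable (\<lambda>n. norm (f n)) \<Longrightarrow> infsum f UNIV = suminf f"
  by (rule infsumI, rule norm_summable_imp_has_sum) (auto intro: summable_sums summable_norm_cancel)

lemma nat_abs_summable_on:
  fixes f :: "nat \<Rightarrow> 'a::banach"
  shows "summable (\<lambda>n. norm (f n)) \<Longrightarrow> (\<lambda>n. norm (f n)) summable_on UNIV"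
  using norm_summable_imp_summable_on[of "\<lambda>n. norm (f n)"] by simp

lemma ip_conv_adj:
  assumes b: "l1 b" and x: "l1 x" and y: "l1 y"
  shows "ip (conv b x) y = ip x (adj b y)"
proof -
  define F where "F n k = hcnj (x n) * (hcnj (b k) * y (n + k))" for n k
  have normF: "norm (F n k) = norm (x n) * (norm (b k) * norm (y (n + k)))" for n k
    by (simp add: F_def norm_mult)
  have inner_sum: "summable (\<lambda>k. norm (F n k))" for n
    unfolding normF by (rule summable_mult) (rule adj_inner_summable_norm[OF b y])
  have inner_le: "(\<Sum>k. norm (F n k)) \<le> norm (x n) * (l1n b * l1n y)" for n
  proof -
    have "(\<Sum>k. norm (F n k)) = norm (x n) * (\<Sum>k. norm (b k) * norm (y (n + k)))"
      unfolding normF by (rule suminf_mult) (rule adj_inner_summable_norm[OF b y])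
    also have "(\<Sum>k. norm (b k) * norm (y (n + k))) \<le> (\<Sum>k. norm (b k) * l1n y)"
      by (rule suminf_le) (use l1_bound[OF y] adj_inner_summable_norm[OF b y] b in
         \<open>auto simp: l1_def intro: mult_left_mono summable_mult2\<close>)
    also have "(\<Sum>k. norm (b k) * l1n y) = l1n b * l1n y"
      using b by (simp add: l1_def l1n_def suminf_mult2)
    finally show ?thesis by (simp add: mult_left_mono)
  qed
  have S0: "summable (\<lambda>n. norm (\<Sum>k. norm (F n k)))"
  proof (rule summable_comparison_test')
    show "summable (\<lambda>n. norm (x n) * (l1n b * l1n y))" using x by (simp add: l1_def summable_mult2)
    show "norm (norm (\<Sum>k. norm (F n k))) \<le> norm (x n) * (l1n b * l1n y)" for n
      using inner_le[of n] suminf_nonneg[OF inner_sum[of n]] by simp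
  qed
  have abs: "(\<lambda>z. norm ((\<lambda>(n, k). F n k) z)) summable_on (Sigma UNIV (\<lambda>_. UNIV))"
  proof (rule summable_on_SigmaI[where g="\<lambda>n. \<Sum>k. norm (F n k)"])
    show "((\<lambda>k. norm ((\<lambda>(n, k). F n k) (n, k))) has_sum (\<Sum>k. norm (F n k))) UNIV" for n
      using sums_nonneg_imp_has_sum[OF summable_sums[OF inner_sum[of n]]] by simp
    show "(\<lambda>n. \<Sum>k. norm (F n k)) summable_on UNIV"
      by (rule norm_summable_imp_summable_on[OF S0])
  qed auto
  have summ: "(\<lambda>(n, k). F n k) summable_on (Sigma UNIV (\<lambda>_. UNIV))"
    by (rule abs_summable_summable[OF abs])
  have R: "ip x (adj b y) = infsum (\<lambda>(n, k). F n k) (Sigma UNIV (\<lambda>_. UNIV))"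
  proof -
    have "ip x (adj b y) = (\<Sum>n. \<Sum>k. F n k)"
      unfolding ip_def adj_def F_def by (simp add: suminf_mult adj_inner_summable[OF b y])
    also have "\<dots> = infsum (\<lambda>n. infsum (F n) UNIV) UNIV"
    proof -
      have "infsum (F n) UNIV = (\<Sum>k. F n k)" for n by (rule nat_infsum[OF inner_sum])
      moreover have "(\<lambda>n. \<Sum>k. F n k) = (\<lambda>n. hcnj (x n) * adj b y n)"
        unfolding F_def adj_def by (simp add: suminf_mult adj_inner_summable[OF b y])
      moreover have "summable (\<lambda>n. norm (hcnj (x n) * adj b y n))"
        by (rule ip_summable_norm[OF x l1_adj[OF b y]])
      ultimately show ?thesis using nat_infsum[of "\<lambda>n. hcnj (x n) * adj b y n"] by simp
    qed
    also have "\<dots> = infsum (\<lambda>(n, k). F n k) (Sigma UNIV (\<lambda>_. UNIV))"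
      by (rule infsum_Sigma'_banach[OF summ])
    finally show ?thesis .
  qed
  define S where "S = Sigma (UNIV :: nat set) (\<lambda>N. {..N})"
  define h where "h = (\<lambda>(n::nat, k::nat). (n + k, k))"
  define G where "G N k = F (N - k) k" for N k
  have bij: "bij_betw h (Sigma UNIV (\<lambda>_. UNIV)) S"
    unfolding bij_betw_def inj_on_def S_def h_def
  proof (intro conjI ballI impI set_eqI iffI)
    fix z assume "z \<in> Sigma (UNIV :: nat set) (\<lambda>N. {..N})"
    then obtain N k where z: "z = (N, k)" "k \<le> N" by auto
    then show "z \<in> (\<lambda>(n, k). (n + k, k)) ` Sigma UNIV (\<lambda>_. UNIV)"
      by (intro image_eqI[where x="(N - k, k)"]) auto
  qed auto
  have Gh: "(\<lambda>z. (\<lambda>(N, k). G N k) (h z)) = (\<lambda>(n, k). F n k)"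
    by (auto simp: h_def G_def)
  have summG: "(\<lambda>(N, k). G N k) summable_on S"
    using summable_on_reindex_bij_betw[OF bij, of "\<lambda>(N, k). G N k"] summ Gh by simp
  have L: "infsum (\<lambda>(n, k). F n k) (Sigma UNIV (\<lambda>_. UNIV)) = ip (conv b x) y"
  proof -
    have "infsum (\<lambda>(n, k). F n k) (Sigma UNIV (\<lambda>_. UNIV)) = infsum (\<lambda>(N, k). G N k) S"
      using infsum_reindex_bij_betw[OF bij, of "\<lambda>(N, k). G N k"] Gh by simp
    also have "\<dots> = infsum (\<lambda>N. infsum (G N) {..N}) UNIV"
      unfolding S_def by (rule infsum_Sigma'_banach[symmetric]) (use summG S_def in simp)
    also have "\<dots> = infsum (\<lambda>N. hcnj (conv b x N) * y N) UNIV"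
    proof (rule infsum_cong)
      fix N
      have "infsum (G N) {..N} = (\<Sum>k\<le>N. G N k)" by simp
      also have "\<dots> = (\<Sum>k\<le>N. hcnj (x (N - k)) * hcnj (b k) * y N)"
        by (rule sum.cong) (auto simp: G_def F_def mult.assoc)
      also have "\<dots> = hcnj (conv b x N) * y N"
        unfolding conv_def hcnj_sum by (simp add: sum_distrib_right hcnj_mult)
      finally show "infsum (G N) {..N} = hcnj (conv b x N) * y N" .
    qed
    also have "\<dots> = ip (conv b x) y"
      unfolding ip_def by (rule nat_infsum[OF ip_summable_norm[OF l1_conv[OF b x] y]])
    finally show ?thesis .
  qed
  show ?thesis using L R by simp
qed


lemma ofr_left: "of_real r * x = r *\<^sub>R (x::hq)" by (simp add: scaleR_conv_of_real)
lemma ofr_right: "x * of_real r = r *\<^sub>R (x::hq)" by (simp add: of_real_def)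

lemma mult_hcnj': "x * hcnj x = (norm x)\<^sup>2 *\<^sub>R (1::hq)"
  by (simp add: mult_hcnj of_real_def)
lemma hcnj_mult_self': "hcnj x * x = (norm x)\<^sup>2 *\<^sub>R (1::hq)"
  by (simp add: hcnj_mult_self of_real_def)

lemma pow_at: "(a::hq) ^ k * hcnj a ^ k = (((norm a)\<^sup>2) ^ k) *\<^sub>R 1"
proof (induction k)
  case (Suc k)
  have "a ^ Suc k * hcnj a ^ Suc k = a * (a ^ k * hcnj a ^ k) * hcnj a"
    by (simp add: power_Suc2 mult.assoc power_commutes)
  also have "\<dots> = (((norm a)\<^sup>2) ^ k) *\<^sub>R (a * hcnj a)"
    unfolding Suc by simp
  also have "\<dots> = (((norm a)\<^sup>2) ^ Suc k) *\<^sub>R 1" by (simp add: mult_hcnj')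
  finally show ?case .
qed simp

lemma pow_ta: "hcnj (a::hq) ^ k * a ^ k = (((norm a)\<^sup>2) ^ k) *\<^sub>R 1"
  using pow_at[of "hcnj a" k] by simp

lemma pow_shift: "hcnj (a::hq) ^ Suc n * a ^ (Suc n + j) = (norm a)\<^sup>2 *\<^sub>R (hcnj a ^ n * a ^ (n + j))"
proof -
  have p1: "a ^ (Suc n + j) = a * a ^ (n + j)" by simp
  have p2: "hcnj a ^ Suc n = hcnj a ^ n * hcnj a" by (simp add: power_Suc2 del: power_Suc)
  have "hcnj a ^ Suc n * a ^ (Suc n + j) = hcnj a ^ n * (hcnj a * a) * a ^ (n + j)"
    unfolding p1 p2 by (simp only: mult.assoc)
  also have "\<dots> = (norm a)\<^sup>2 *\<^sub>R (hcnj a ^ n * a ^ (n + j))"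
    by (simp add: hcnj_mult_self')
  finally show ?thesis .
qed

lemma beta_alt: "beta a n = (if n = 0 then norm a *\<^sub>R 1 else (- ((1 - (norm a)\<^sup>2) / norm a)) *\<^sub>R (hcnj a ^ n))"
  unfolding beta_def by (simp only: mult_minus_left ofr_left scaleR_minus_left) (simp add: of_real_def)

lemma hcnj_beta: "hcnj (beta a k) = (if k = 0 then norm a *\<^sub>R 1 else (- ((1 - (norm a)\<^sup>2) / norm a)) *\<^sub>R a ^ k)"
  by (simp add: beta_alt hcnj_power)

definition ufac :: "hq \<Rightarrow> nat \<Rightarrow> hq" where
  "ufac a = (\<lambda>n. sqrt (1 - (norm a)\<^sup>2) *\<^sub>R (hcnj a) ^ n)"

lemma ufac_prod:
  assumes "norm a < 1"
  shows "ufac a n * hcnj (ufac a m) = (1 - (norm a)\<^sup>2) *\<^sub>R (hcnj a ^ n * a ^ m)"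
proof -
  have q: "(norm a)\<^sup>2 \<le> 1" using assms by (simp add: power_le_one)
  show ?thesis using q by (simp add: ufac_def hcnj_power)
qed

lemma S_formula:
  assumes a0: "a \<noteq> 0"
  shows "(\<Sum>i\<le>n. beta a i * hcnj (beta a (i + j))) =
     (if j = 0 then 1 else 0) - (1 - (norm a)\<^sup>2) *\<^sub>R (hcnj a ^ n * a ^ (n + j))"
proof (induction n)
  case 0
  have na: "norm a \<noteq> 0" using a0 by simp
  show ?case
  proof (cases "j = 0")
    case True
    then show ?thesis by (simp add: beta_alt hcnj_beta power2_eq_square algebra_simps)
  next
    case False
    then show ?thesis using na by (simp add: beta_alt hcnj_beta hcnj_power)
  qed
next
  case (Suc n)
  define X where "X = hcnj a ^ n * a ^ (n + j)"
  define q where "q = (norm a)\<^sup>2"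
  define s where "s = (1 - q) / norm a"
  have na: "norm a \<noteq> 0" using a0 by simp
  have "beta a (Suc n) * hcnj (beta a (Suc n + j)) = (s * s) *\<^sub>R (hcnj a ^ Suc n * a ^ (Suc n + j))"
    by (simp add: beta_alt hcnj_beta s_def q_def hcnj_power hcnj_mult power_commutes)
  also have "\<dots> = (s * s * q) *\<^sub>R X"
    unfolding pow_shift by (simp add: X_def q_def)
  finally have e0: "beta a (Suc n) * hcnj (beta a (Suc n + j)) = (s * s * q) *\<^sub>R X" .
  have e: "beta a (Suc n) * hcnj (beta a (Suc (n + j))) = (s * s * q) *\<^sub>R X"
    using e0 by simp
  have sq: "s * s * q = (1 - q) * (1 - q)"
    using na by (simp add: s_def q_def power2_eq_square field_simps)
  have "(\<Sum>i\<le>Suc n. beta a i * hcnj (beta a (i + j))) =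
      (if j = 0 then 1 else 0) - (1 - q) *\<^sub>R X + (s * s * q) *\<^sub>R X"
    using Suc by (simp add: e del: power_Suc) (simp add: X_def q_def)
  also have "\<dots> = (if j = 0 then 1 else 0) - ((1 - q) * q) *\<^sub>R X"
    unfolding sq by (simp add: algebra_simps) (simp add: scaleR_add_left[symmetric])
  also have "((1 - q) * q) *\<^sub>R X = (1 - q) *\<^sub>R (hcnj a ^ Suc n * a ^ (Suc n + j))"
    unfolding pow_shift by (simp add: X_def q_def)
  finally show ?case by (simp add: q_def)
qed


lemma Mform_le:
  assumes a0: "a \<noteq> 0" and a1: "norm a < 1" and nm: "n \<le> m"
  shows "(\<Sum>k\<le>n. beta a (n - k) * hcnj (beta a (m - k))) = (if n = m then 1 else 0) - ufac a n * hcnj (ufac a m)"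
proof -
  obtain j where m: "m = n + j" using nm le_Suc_ex by blast
  have "(\<Sum>k\<le>n. beta a (n - k) * hcnj (beta a (m - k))) = (\<Sum>i\<le>n. beta a i * hcnj (beta a (i + j)))"
    by (rule sum.reindex_bij_witness[where i="\<lambda>k. n - k" and j="\<lambda>k. n - k"]) (auto simp: m)
  also have "\<dots> = (if j = 0 then 1 else 0) - (1 - (norm a)\<^sup>2) *\<^sub>R (hcnj a ^ n * a ^ (n + j))"
    by (rule S_formula[OF a0])
  finally show ?thesis by (simp add: ufac_prod[OF a1] m)
qed

lemma Mform:
  assumes a0: "a \<noteq> 0" and a1: "norm a < 1"
  shows "(\<Sum>k\<le>min n m. beta a (n - k) * hcnj (beta a (m - k))) = (if n = m then 1 else 0) - ufac a n * hcnj (ufac a m)"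
proof (cases "n \<le> m")
  case True
  then show ?thesis using Mform_le[OF a0 a1 True] by (simp add: min_def)
next
  case False
  then have mn: "m \<le> n" by simp
  have "(\<Sum>k\<le>min n m. beta a (n - k) * hcnj (beta a (m - k))) = hcnj (\<Sum>k\<le>m. beta a (m - k) * hcnj (beta a (n - k)))"
    using mn by (simp add: hcnj_sum hcnj_mult min_def)
  also have "\<dots> = hcnj ((if m = n then 1 else 0) - ufac a m * hcnj (ufac a n))"
    by (simp only: Mform_le[OF a0 a1 mn])
  also have "\<dots> = (if n = m then 1 else 0) - ufac a n * hcnj (ufac a m)"
    using False by (simp add: hcnj_mult)
  finally show ?thesis .
qed

lemma l1_beta:
  assumes a0: "a \<noteq> 0" and a1: "norm a < 1"
  shows "l1 (beta a)"
  unfolding l1_def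
proof (rule summable_comparison_test')
  define s where "s = (1 - (norm a)\<^sup>2) / norm a"
  have s0: "0 \<le> s" using a1 by (simp add: s_def power_le_one)
  show "summable (\<lambda>n. (norm a + s) * norm a ^ n)"
    using a1 by (simp add: summable_mult summable_geometric)
  show "norm (norm (beta a n)) \<le> (norm a + s) * norm a ^ n" for n
  proof (cases "n = 0")
    case True then show ?thesis using s0 by (simp add: beta_alt)
  next
    case False
    have q1: "(norm a)\<^sup>2 \<le> 1" using a1 by (simp add: power_le_one)
    have "norm (beta a n) = s * norm a ^ n" using False s0 q1 by (simp add: beta_alt s_def norm_power)
    also have "\<dots> \<le> (norm a + s) * norm a ^ n" by (simp add: mult_right_mono)
    finally show ?thesis by simp
  qed
qed

lemma l1_ufac:
  assumes a1: "norm a < 1"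
  shows "l1 (ufac a)"
  unfolding l1_def ufac_def using a1
  by (simp add: norm_power summable_mult summable_geometric)

lemma ip_ufac_self:
  assumes a1: "norm a < 1"
  shows "ip (ufac a) (ufac a) = 1"
proof -
  define q where "q = (norm a)\<^sup>2"
  have q1: "norm q < 1" using a1 by (simp add: q_def power_less_one_iff abs_less_iff)
  have e: "hcnj (ufac a n) * ufac a n = ((1 - q) * q ^ n) *\<^sub>R 1" for n
  proof -
    have "hcnj (ufac a n) * ufac a n = ufac a n * hcnj (ufac a n)"
      by (simp add: ufac_def hcnj_power pow_at pow_ta)
    also have "\<dots> = ((1 - q) * q ^ n) *\<^sub>R 1"
      unfolding ufac_prod[OF a1] by (simp add: q_def pow_ta)
    finally show ?thesis .
  qed
  have "(\<lambda>n. (1 - q) * q ^ n) sums ((1 - q) * (1 / (1 - q)))"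
    by (rule sums_mult[OF geometric_sums[OF q1]])
  then have "(\<lambda>n. ((1 - q) * q ^ n) *\<^sub>R (1::hq)) sums (((1 - q) * (1 / (1 - q))) *\<^sub>R 1)"
    by (rule sums_scaleR_left)
  moreover have "(1 - q) * (1 / (1 - q)) = 1" using q1 by simp
  ultimately have "(\<lambda>n. hcnj (ufac a n) * ufac a n) sums 1" by (simp add: e)
  then show ?thesis unfolding ip_def by (rule sums_unique[symmetric])
qed

lemma adj_beta_ufac:
  assumes a0: "a \<noteq> 0" and a1: "norm a < 1"
  shows "adj (beta a) (ufac a) = (\<lambda>n. 0)"
proof
  fix n
  define q where "q = (norm a)\<^sup>2"
  define s where "s = (1 - q) / norm a"
  define r where "r = sqrt (1 - q)"
  define c where "c k = (if k = 0 then norm a else - s * q ^ k)" for k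
  have q1: "norm q < 1" using a1 by (simp add: q_def power_less_one_iff abs_less_iff)
  have na: "norm a \<noteq> 0" using a0 by simp
  have e: "hcnj (beta a k) * ufac a (n + k) = c k *\<^sub>R (r *\<^sub>R hcnj a ^ n)" for k
  proof (cases "k = 0")
    case True then show ?thesis by (simp add: hcnj_beta c_def ufac_def r_def q_def)
  next
    case False
    have pa: "hcnj a ^ (n + k) = hcnj a ^ k * hcnj a ^ n" by (simp add: power_add[symmetric] add.commute)
    have "hcnj (beta a k) * ufac a (n + k) = (- s * r) *\<^sub>R (a ^ k * hcnj a ^ k * hcnj a ^ n)"
      using False by (simp add: hcnj_beta ufac_def r_def s_def q_def pa mult.assoc mult_ac)
    also have "\<dots> = c k *\<^sub>R (r *\<^sub>R hcnj a ^ n)"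
      using False by (simp add: pow_at c_def q_def)
    finally show ?thesis .
  qed
  have cs: "c sums 0"
  proof -
    have g: "(\<lambda>k. - s * q ^ k) sums (- s * (1 / (1 - q)))"
      by (rule sums_mult[OF geometric_sums[OF q1]])
    have d: "(\<lambda>k. if k = 0 then norm a + s else 0) sums (norm a + s)"
      using sums_single[of 0 "\<lambda>_. norm a + s"] by simp
    have "(\<lambda>k. - s * q ^ k + (if k = 0 then norm a + s else 0)) sums (- s * (1 / (1 - q)) + (norm a + s))"
      by (rule sums_add[OF g d])
    moreover have "(\<lambda>k. - s * q ^ k + (if k = 0 then norm a + s else 0)) = c"
      by (auto simp: c_def)
    moreover have "- s * (1 / (1 - q)) + (norm a + s) = 0"
      using q1 na by (simp add: s_def q_def field_simps power2_eq_square)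
    ultimately show ?thesis by simp
  qed
  have "(\<lambda>k. c k *\<^sub>R (r *\<^sub>R hcnj a ^ n)) sums (0 *\<^sub>R (r *\<^sub>R hcnj a ^ n))"
    by (rule sums_scaleR_left[OF cs])
  then have "(\<lambda>k. hcnj (beta a k) * ufac a (n + k)) sums 0" by (simp add: e)
  then show "adj (beta a) (ufac a) n = 0" unfolding adj_def by (rule sums_unique[symmetric])
qed


lemma conv_adj_beta:
  assumes a0: "a \<noteq> 0" and a1: "norm a < 1" and y: "l1 y"
  shows "conv (beta a) (adj (beta a) y) = (\<lambda>n. y n - ufac a n * ip (ufac a) y)"
proof (rule ext)
  fix n
  define g where "g k m = (if k \<le> m then hcnj (beta a (m - k)) * y m else 0)" for k m
  have lb: "l1 (beta a)" by (rule l1_beta[OF a0 a1])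
  have gs: "g k sums adj (beta a) y k" for k
  proof -
    have "(\<lambda>j. hcnj (beta a j) * y (k + j)) sums adj (beta a) y k"
      unfolding adj_def by (rule summable_sums[OF adj_inner_summable[OF lb y]])
    moreover have "(\<lambda>j. g k (j + k)) = (\<lambda>j. hcnj (beta a j) * y (k + j))"
      by (auto simp: g_def add.commute)
    ultimately have "(\<lambda>j. g k (j + k)) sums adj (beta a) y k" by simp
    moreover have "g k = (\<lambda>j. if k \<le> j then hcnj (beta a (j - k)) * y j else 0)"
      by (simp add: fun_eq_iff g_def)
    ultimately show ?thesis using sums_zero_iff_shift[of k "g k"] by (simp add: g_def)
  qed
  have s1: "(\<lambda>m. \<Sum>k\<le>n. beta a (n - k) * g k m) sums (\<Sum>k\<le>n. beta a (n - k) * adj (beta a) y k)"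
    by (rule sums_sum) (rule sums_mult[OF gs])
  have e1: "(\<Sum>k\<le>n. beta a (n - k) * g k m) = (if m = n then y m else 0) - ufac a n * (hcnj (ufac a m) * y m)" for m
  proof -
    have "(\<Sum>k\<le>n. beta a (n - k) * g k m) = (\<Sum>k\<le>n. if k \<in> {..m} then beta a (n - k) * hcnj (beta a (m - k)) * y m else 0)"
      by (rule sum.cong) (auto simp: g_def mult.assoc)
    also have "\<dots> = (\<Sum>k\<in>{..n} \<inter> {..m}. beta a (n - k) * hcnj (beta a (m - k)) * y m)"
      by (rule sum.inter_restrict[symmetric]) simp
    also have "{..n} \<inter> {..m} = {..min n m}" by auto
    also have "(\<Sum>k\<le>min n m. beta a (n - k) * hcnj (beta a (m - k)) * y m)
        = (\<Sum>k\<le>min n m. beta a (n - k) * hcnj (beta a (m - k))) * y m"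
      by (simp add: sum_distrib_right)
    also have "\<dots> = ((if n = m then 1 else 0) - ufac a n * hcnj (ufac a m)) * y m"
      by (simp only: Mform[OF a0 a1])
    finally show ?thesis by (auto simp: left_diff_distrib mult.assoc)
  qed
  have s2: "(\<lambda>m. (if m = n then y m else 0) - ufac a n * (hcnj (ufac a m) * y m)) sums (y n - ufac a n * ip (ufac a) y)"
    unfolding ip_def
    by (rule sums_diff[OF sums_single sums_mult]) (rule summable_sums[OF ip_summable[OF l1_ufac[OF a1] y]])
  have "conv (beta a) (adj (beta a) y) n = (\<Sum>k\<le>n. beta a (n - k) * adj (beta a) y k)"
    unfolding conv_def by (rule sum.reindex_bij_witness[where i="\<lambda>k. n - k" and j="\<lambda>k. n - k"]) auto
  also have "\<dots> = y n - ufac a n * ip (ufac a) y"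
    using s1 s2 unfolding e1 by (rule sums_unique2)
  finally show "conv (beta a) (adj (beta a) y) n = y n - ufac a n * ip (ufac a) y" .
qed

lemma defect_beta:
  assumes a0: "a \<noteq> 0" and a1: "norm a < 1" and x: "l1 x" and y: "l1 y"
  shows "ip x y - ip (adj (beta a) x) (adj (beta a) y) = ip x (ufac a) * ip (ufac a) y"
proof -
  have lb: "l1 (beta a)" by (rule l1_beta[OF a0 a1])
  have lu: "l1 (ufac a)" by (rule l1_ufac[OF a1])
  have lax: "l1 (adj (beta a) x)" and lay: "l1 (adj (beta a) y)" using l1_adj[OF lb] x y by auto
  have ly': "l1 (\<lambda>n. y n - ufac a n * ip (ufac a) y)" using y lu by simp
  have "ip (adj (beta a) y) (adj (beta a) x) = ip (conv (beta a) (adj (beta a) y)) x"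
    by (rule ip_conv_adj[OF lb lay x, symmetric])
  also have "\<dots> = ip (\<lambda>n. y n - ufac a n * ip (ufac a) y) x"
    by (simp only: conv_adj_beta[OF a0 a1 y])
  finally have e: "ip (adj (beta a) y) (adj (beta a) x) = ip (\<lambda>n. y n - ufac a n * ip (ufac a) y) x" .
  have "ip (adj (beta a) x) (adj (beta a) y) = hcnj (ip (adj (beta a) y) (adj (beta a) x))"
    by (simp add: hcnj_ip lax lay)
  also have "\<dots> = ip x (\<lambda>n. y n - ufac a n * ip (ufac a) y)"
    unfolding e by (simp add: hcnj_ip ly' x)
  also have "\<dots> = ip x y - ip x (ufac a) * ip (ufac a) y"
    using x y lu by (simp add: ip_diff_right ip_mult_right)
  finally show ?thesis by simp
qed

lemma ip_zero_right[simp]: "ip x (\<lambda>n. 0) = 0"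
  by (simp add: ip_def)

lemma ip_conv_ufac:
  assumes a0: "a \<noteq> 0" and a1: "norm a < 1" and x: "l1 x"
  shows "ip (conv (beta a) x) (ufac a) = 0"
  using ip_conv_adj[OF l1_beta[OF a0 a1] x l1_ufac[OF a1]] adj_beta_ufac[OF a0 a1] by simp

lemma conv_diff: "conv b (\<lambda>n. v n - w n) = (\<lambda>n. conv b v n - conv b w n)"
  by (simp add: conv_def right_diff_distrib sum_subtractf)

lemma conv_inj:
  assumes b0: "b 0 \<noteq> 0" and z: "conv b z = (\<lambda>n. 0)"
  shows "z = (\<lambda>n. 0)"
proof
  fix n show "z n = 0"
  proof (induction n rule: less_induct)
    case (less n)
    have sp: "(\<Sum>k\<in>{..n}. b k * z (n - k)) = b 0 * z (n - 0) + (\<Sum>k\<in>{..n} - {0}. b k * z (n - k))"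
      by (rule sum.remove) auto
    have z0: "(\<Sum>k\<in>{..n} - {0}. b k * z (n - k)) = 0"
      by (rule sum.neutral) (auto simp: less)
    have "conv b z n = 0" using z by simp
    then have "b 0 * z n = 0" unfolding conv_def sp z0 by simp
    then show "z n = 0" using b0 by simp
  qed
qed

lemma conv_adj_conv:
  assumes a0: "a \<noteq> 0" and a1: "norm a < 1" and y: "l1 y"
  shows "adj (beta a) (conv (beta a) y) = y"
proof -
  have lb: "l1 (beta a)" by (rule l1_beta[OF a0 a1])
  have lc: "l1 (conv (beta a) y)" by (rule l1_conv[OF lb y])
  have "ip (ufac a) (conv (beta a) y) = hcnj (ip (conv (beta a) y) (ufac a))"
    by (simp add: hcnj_ip lc l1_ufac[OF a1])
  also have "\<dots> = 0" by (simp add: ip_conv_ufac[OF a0 a1 y])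
  finally have u0: "ip (ufac a) (conv (beta a) y) = 0" .
  have "conv (beta a) (adj (beta a) (conv (beta a) y)) = conv (beta a) y"
    unfolding conv_adj_beta[OF a0 a1 lc] u0 by simp
  then have "conv (beta a) (\<lambda>n. adj (beta a) (conv (beta a) y) n - y n) = (\<lambda>n. 0)"
    unfolding conv_diff by simp
  then have "(\<lambda>n. adj (beta a) (conv (beta a) y) n - y n) = (\<lambda>n. 0)"
    by (rule conv_inj[rotated]) (use a0 in \<open>simp add: beta_alt\<close>)
  then have "adj (beta a) (conv (beta a) y) n - y n = 0" for n by (rule fun_cong)
  then show ?thesis by (intro ext) simp
qed

lemma isometry_beta:
  assumes a0: "a \<noteq> 0" and a1: "norm a < 1" and x: "l1 x" and y: "l1 y"
  shows "ip (conv (beta a) x) (conv (beta a) y) = ip x y"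
proof -
  have lb: "l1 (beta a)" by (rule l1_beta[OF a0 a1])
  have "ip (conv (beta a) x) (conv (beta a) y) = ip x (adj (beta a) (conv (beta a) y))"
    by (rule ip_conv_adj[OF lb x l1_conv[OF lb y]])
  then show ?thesis by (simp add: conv_adj_conv[OF a0 a1 y])
qed


lemma conv_fps: "conv a b = fps_nth (Abs_fps a * Abs_fps b)"
  by (rule ext) (simp add: conv_def fps_mult_nth atLeast0AtMost)

lemma conv_assoc: "conv (conv a b) c = conv a (conv b c)"
proof -
  have "Abs_fps (conv a b) = Abs_fps a * Abs_fps b" by (simp add: conv_fps fps_nth_inverse)
  moreover have "Abs_fps (conv b c) = Abs_fps b * Abs_fps c" by (simp add: conv_fps fps_nth_inverse)
  ultimately show ?thesis by (simp add: conv_fps mult.assoc)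
qed

definition dl :: "nat \<Rightarrow> nat \<Rightarrow> hq" where "dl n = (\<lambda>m. if m = n then 1 else 0)"

lemma l1_dl[simp]: "l1 (dl n)"
proof -
  have "summable (\<lambda>m. if m = n then norm (1::hq) else 0)" by (rule summable_single)
  then show ?thesis unfolding l1_def dl_def by (rule summable_cong[THEN iffD1, rotated]) auto
qed

lemma ip_dl: "ip (dl n) z = z n"
proof -
  have "(\<lambda>m. hcnj (dl n m) * z m) = (\<lambda>m. if m = n then z m else 0)" by (auto simp: dl_def)
  then show ?thesis unfolding ip_def using sums_single[of n z] sums_unique by (metis sums_unique)
qed

lemma adj_conv:
  assumes a: "l1 a" and b: "l1 b" and x: "l1 x"
  shows "adj (conv a b) x = adj b (adj a x)"
proof
  fix n
  have lab: "l1 (conv a b)" by (rule l1_conv[OF a b])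
  have "adj (conv a b) x n = ip (dl n) (adj (conv a b) x)" by (simp add: ip_dl)
  also have "\<dots> = ip (conv (conv a b) (dl n)) x" by (rule ip_conv_adj[OF lab l1_dl x, symmetric])
  also have "\<dots> = ip (conv a (conv b (dl n))) x" by (simp add: conv_assoc)
  also have "\<dots> = ip (conv b (dl n)) (adj a x)" by (rule ip_conv_adj[OF a l1_conv[OF b l1_dl] x])
  also have "\<dots> = ip (dl n) (adj b (adj a x))" by (rule ip_conv_adj[OF b l1_dl l1_adj[OF a x]])
  also have "\<dots> = adj b (adj a x) n" by (simp add: ip_dl)
  finally show "adj (conv a b) x n = adj b (adj a x) n" .
qed

lemma adj_dl0: "adj (dl 0) x = x"
proof
  fix n
  have "(\<lambda>k. hcnj (dl 0 k) * x (n + k)) = (\<lambda>k. if k = 0 then x (n + k) else 0)" by (auto simp: dl_def)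
  then show "adj (dl 0) x n = x n" unfolding adj_def using sums_single[of 0 "\<lambda>k. x (n + k)"]
    by (metis add.right_neutral sums_unique)
qed

definition bseq :: "hq list \<Rightarrow> nat \<Rightarrow> hq" where "bseq L = fps_nth (BP L)"

lemma bseq_Nil: "bseq [] = dl 0" by (auto simp: bseq_def dl_def)
lemma bseq_Cons: "bseq (a # L) = conv (beta a) (bseq L)"
  by (simp add: bseq_def conv_fps blf_def fps_nth_inverse)

definition good :: "hq list \<Rightarrow> bool" where "good L \<longleftrightarrow> (\<forall>a\<in>set L. a \<noteq> 0 \<and> norm a < 1)"

fun Wl :: "hq list \<Rightarrow> (nat \<Rightarrow> hq) list" where
  "Wl [] = []"
| "Wl (a # L) = ufac a # map (conv (beta a)) (Wl L)"

lemma length_Wl: "length (Wl L) = length L"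
  by (induction L) auto

lemma l1_bseq: "good L \<Longrightarrow> l1 (bseq L)"
  by (induction L) (auto simp: good_def bseq_Nil bseq_Cons intro: l1_conv l1_beta)

lemma l1_Wl: "good L \<Longrightarrow> w \<in> set (Wl L) \<Longrightarrow> l1 w"
  by (induction L arbitrary: w) (auto simp: good_def intro: l1_conv l1_beta l1_ufac)

lemma defect_L:
  assumes "good L" "l1 x" "l1 y"
  shows "ip x y - ip (adj (bseq L) x) (adj (bseq L) y) = (\<Sum>w\<leftarrow>Wl L. ip x w * ip w y)"
  using assms
proof (induction L arbitrary: x y)
  case Nil
  then show ?case by (simp add: bseq_Nil adj_dl0)
next
  case (Cons a L)
  have a0: "a \<noteq> 0" and a1: "norm a < 1" and gL: "good L" using Cons.prems by (auto simp: good_def)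
  have lb: "l1 (beta a)" by (rule l1_beta[OF a0 a1])
  have lbL: "l1 (bseq L)" by (rule l1_bseq[OF gL])
  have x: "l1 x" and y: "l1 y" using Cons.prems by auto
  have lx': "l1 (adj (beta a) x)" and ly': "l1 (adj (beta a) y)" using l1_adj[OF lb] x y by auto
  have adjs: "adj (bseq (a # L)) z = adj (bseq L) (adj (beta a) z)" if "l1 z" for z
    unfolding bseq_Cons by (rule adj_conv[OF lb lbL that])
  have IH: "ip (adj (beta a) x) (adj (beta a) y) - ip (adj (bseq L) (adj (beta a) x)) (adj (bseq L) (adj (beta a) y))
      = (\<Sum>w\<leftarrow>Wl L. ip (adj (beta a) x) w * ip w (adj (beta a) y))"
    by (rule Cons.IH[OF gL lx' ly'])
  have t1: "ip (adj (beta a) x) w = ip x (conv (beta a) w)" if "w \<in> set (Wl L)" for w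
  proof -
    have lw: "l1 w" by (rule l1_Wl[OF gL that])
    have "ip (adj (beta a) x) w = hcnj (ip w (adj (beta a) x))" by (simp add: hcnj_ip lw lx')
    also have "\<dots> = hcnj (ip (conv (beta a) w) x)" by (simp add: ip_conv_adj[OF lb lw x])
    also have "\<dots> = ip x (conv (beta a) w)" by (simp add: hcnj_ip x l1_conv[OF lb lw])
    finally show ?thesis .
  qed
  have t2: "ip w (adj (beta a) y) = ip (conv (beta a) w) y" if "w \<in> set (Wl L)" for w
    using ip_conv_adj[OF lb l1_Wl[OF gL that] y] by simp
  have sumeq: "(\<Sum>w\<leftarrow>Wl L. ip (adj (beta a) x) w * ip w (adj (beta a) y))
      = (\<Sum>w\<leftarrow>map (conv (beta a)) (Wl L). ip x w * ip w y)"
    by (simp add: comp_def t1 t2 cong: map_cong)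
  have "ip x y - ip (adj (bseq (a # L)) x) (adj (bseq (a # L)) y)
      = (ip x y - ip (adj (beta a) x) (adj (beta a) y))
        + (ip (adj (beta a) x) (adj (beta a) y) - ip (adj (bseq L) (adj (beta a) x)) (adj (bseq L) (adj (beta a) y)))"
    by (simp add: adjs x y)
  also have "\<dots> = ip x (ufac a) * ip (ufac a) y + (\<Sum>w\<leftarrow>map (conv (beta a)) (Wl L). ip x w * ip w y)"
    unfolding defect_beta[OF a0 a1 x y] IH sumeq ..
  finally show ?case by simp
qed

lemma orth_Wl:
  assumes "good L" "i < length L" "j < length L"
  shows "ip (Wl L ! i) (Wl L ! j) = (if i = j then 1 else 0)"
  using assms
proof (induction L arbitrary: i j)
  case Nil then show ?case by simp
next
  case (Cons a L)
  have a0: "a \<noteq> 0" and a1: "norm a < 1" and gL: "good L" using Cons.prems by (auto simp: good_def)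
  have lb: "l1 (beta a)" by (rule l1_beta[OF a0 a1])
  have lu: "l1 (ufac a)" by (rule l1_ufac[OF a1])
  have lw: "l1 (Wl L ! k)" if "k < length L" for k
    using l1_Wl[OF gL] that length_Wl[of L] by (metis nth_mem)
  have z1: "ip (conv (beta a) (Wl L ! k)) (ufac a) = 0" if "k < length L" for k
    by (rule ip_conv_ufac[OF a0 a1 lw[OF that]])
  have z2: "ip (ufac a) (conv (beta a) (Wl L ! k)) = 0" if "k < length L" for k
    using hcnj_ip[OF l1_conv[OF lb lw[OF that]] lu] z1[OF that] by simp
  show ?case
  proof (cases i)
    case 0
    then show ?thesis
    proof (cases j)
      case 0 then show ?thesis using \<open>i = 0\<close> by (simp add: ip_ufac_self[OF a1])
    next
      case (Suc j') then show ?thesis using \<open>i = 0\<close> Cons.prems z2[of j'] length_Wl[of L] by simp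
    qed
  next
    case (Suc i')
    then show ?thesis
    proof (cases j)
      case 0 then show ?thesis using \<open>i = Suc i'\<close> Cons.prems z1[of i'] length_Wl[of L] by simp
    next
      case (Suc j')
      have "ip (Wl (a # L) ! i) (Wl (a # L) ! j) = ip (Wl L ! i') (Wl L ! j')"
        using \<open>i = Suc i'\<close> Suc Cons.prems length_Wl[of L]
        by (simp add: isometry_beta[OF a0 a1 lw lw])
      also have "\<dots> = (if i' = j' then 1 else 0)"
        using Cons.IH[OF gL] Cons.prems \<open>i = Suc i'\<close> Suc by simp
      finally show ?thesis using \<open>i = Suc i'\<close> Suc by simp
    qed
  qed
qed


definition ep :: "hq \<Rightarrow> nat \<Rightarrow> hq" where "ep p = (\<lambda>n. hcnj (p ^ n))"
definition ev :: "(nat \<Rightarrow> hq) \<Rightarrow> hq \<Rightarrow> hq" where "ev w p = (\<Sum>n. p ^ n * w n)"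
definition Khq :: "(nat \<Rightarrow> hq) \<Rightarrow> hq \<Rightarrow> hq \<Rightarrow> hq" where
  "Khq b p q = (\<Sum>n. p ^ n * (1 - ev b p * hcnj (ev b q)) * hcnj (q ^ n))"

lemma l1_ep: "norm p < 1 \<Longrightarrow> l1 (ep p)"
  unfolding l1_def ep_def by (simp add: norm_power summable_geometric)

lemma ev_ip: "ev w p = ip (ep p) w"
  by (simp add: ev_def ip_def ep_def)

lemma ev_summable_norm:
  assumes p: "norm p < 1" and w: "l1 w"
  shows "summable (\<lambda>n. norm (p ^ n * w n))"
proof (rule summable_comparison_test')
  show "summable (\<lambda>n. norm (w n))" using w by (simp add: l1_def)
  show "norm (norm (p ^ n * w n)) \<le> norm (w n)" for n
    using p by (simp add: norm_mult norm_power mult_left_le_one_le power_le_one)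
qed

lemma ev_summable: "norm p < 1 \<Longrightarrow> l1 w \<Longrightarrow> summable (\<lambda>n. p ^ n * w n)"
  by (rule summable_norm_cancel[OF ev_summable_norm])

lemma adj_ep:
  assumes p: "norm p < 1" and b: "l1 b"
  shows "adj b (ep p) = (\<lambda>n. hcnj (p ^ n * ev b p))"
proof
  fix n
  have s: "summable (\<lambda>k. p ^ k * b k)" by (rule ev_summable[OF p b])
  have s2: "summable (\<lambda>k. p ^ n * (p ^ k * b k))" by (rule summable_mult[OF s])
  have "adj b (ep p) n = (\<Sum>k. hcnj (p ^ n * (p ^ k * b k)))"
    unfolding adj_def ep_def by (simp add: hcnj_mult power_add mult.assoc)
  also have "\<dots> = hcnj (\<Sum>k. p ^ n * (p ^ k * b k))" by (rule hcnj_suminf[OF s2, symmetric])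
  also have "(\<Sum>k. p ^ n * (p ^ k * b k)) = p ^ n * ev b p"
    unfolding ev_def by (rule suminf_mult[OF s])
  finally show "adj b (ep p) n = hcnj (p ^ n * ev b p)" .
qed

lemma K_ip:
  assumes b: "l1 b" and p: "norm p < 1" and q: "norm q < 1"
  shows "Khq b p q = ip (ep p) (ep q) - ip (adj b (ep p)) (adj b (ep q))"
    and "summable (\<lambda>n. p ^ n * (1 - ev b p * hcnj (ev b q)) * hcnj (q ^ n))"
proof -
  have s1: "summable (\<lambda>n. hcnj (ep p n) * ep q n)" by (rule ip_summable[OF l1_ep[OF p] l1_ep[OF q]])
  have s2: "summable (\<lambda>n. hcnj (adj b (ep p) n) * adj b (ep q) n)"
    by (rule ip_summable[OF l1_adj[OF b l1_ep[OF p]] l1_adj[OF b l1_ep[OF q]]])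
  have e: "p ^ n * (1 - ev b p * hcnj (ev b q)) * hcnj (q ^ n)
      = hcnj (ep p n) * ep q n - hcnj (adj b (ep p) n) * adj b (ep q) n" for n
    by (simp only: adj_ep[OF p b] adj_ep[OF q b]) (simp add: ep_def hcnj_mult algebra_simps)
  have "(\<lambda>n. hcnj (ep p n) * ep q n - hcnj (adj b (ep p) n) * adj b (ep q) n) sums
     (ip (ep p) (ep q) - ip (adj b (ep p)) (adj b (ep q)))"
    unfolding ip_def by (rule sums_diff[OF summable_sums[OF s1] summable_sums[OF s2]])
  then have S: "(\<lambda>n. p ^ n * (1 - ev b p * hcnj (ev b q)) * hcnj (q ^ n)) sums
     (ip (ep p) (ep q) - ip (adj b (ep p)) (adj b (ep q)))" by (simp only: e)
  then show "Khq b p q = ip (ep p) (ep q) - ip (adj b (ep p)) (adj b (ep q))"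
    unfolding Khq_def by (rule sums_unique[symmetric])
  show "summable (\<lambda>n. p ^ n * (1 - ev b p * hcnj (ev b q)) * hcnj (q ^ n))"
    using S by (rule sums_summable)
qed

lemma kernel_formula:
  assumes g: "good L" and p: "norm p < 1" and q: "norm q < 1"
  shows "Khq (bseq L) p q = (\<Sum>w\<leftarrow>Wl L. ev w p * hcnj (ev w q))"
proof -
  have "Khq (bseq L) p q = (\<Sum>w\<leftarrow>Wl L. ip (ep p) w * ip w (ep q))"
    unfolding K_ip(1)[OF l1_bseq[OF g] p q] by (rule defect_L[OF g l1_ep[OF p] l1_ep[OF q]])
  also have "\<dots> = (\<Sum>w\<leftarrow>Wl L. ev w p * hcnj (ev w q))"
  proof (rule arg_cong[where f=sum_list], rule map_cong[OF refl])
    fix w assume "w \<in> set (Wl L)"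
    then have lw: "l1 w" by (rule l1_Wl[OF g])
    show "ip (ep p) w * ip w (ep q) = ev w p * hcnj (ev w q)"
      by (simp add: ev_ip hcnj_ip lw l1_ep[OF q])
  qed
  finally show ?thesis .
qed


lemma identity_principle:
  assumes z: "l1 z" and h: "\<And>t. 0 < t \<Longrightarrow> t < 1 \<Longrightarrow> ev z (of_real t) = 0"
  shows "z = (\<lambda>n. 0)"
proof (rule ccontr)
  assume "z \<noteq> (\<lambda>n. 0)"
  then have ex: "\<exists>n. z n \<noteq> 0" by auto
  define n0 where "n0 = (LEAST n. z n \<noteq> 0)"
  have zn0: "z n0 \<noteq> 0" using LeastI_ex[OF ex] n0_def by simp
  have below: "z i = 0" if "i < n0" for i using not_less_Least[of i "\<lambda>n. z n \<noteq> 0"] that n0_def by auto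
  define g where "g m = z (m + n0)" for m
  define C where "C = (\<Sum>m. norm (g (Suc m)))"
  have sg: "summable (\<lambda>m. norm (g (Suc m)))"
    using summable_ignore_initial_segment[of "\<lambda>n. norm (z n)" "Suc n0"] z
    by (simp add: l1_def g_def add.commute add.left_commute)
  have C0: "0 \<le> C" unfolding C_def by (rule suminf_nonneg[OF sg]) simp
  have key: "norm (z n0) \<le> t * C" if t0: "0 < t" and t1: "t < 1" for t
  proof -
    have nt: "norm (of_real t :: hq) < 1" using t0 t1 by simp
    have pw: "(of_real t :: hq) ^ n * z n = t ^ n *\<^sub>R z n" for n
      by (simp add: of_real_power[symmetric] scaleR_conv_of_real del: of_real_power)
    have "(\<lambda>n. (of_real t :: hq) ^ n * z n) sums ev z (of_real t)"
      unfolding ev_def by (rule summable_sums[OF ev_summable[OF nt z]])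
    then have s0: "(\<lambda>n. t ^ n *\<^sub>R z n) sums 0" using h[OF t0 t1] by (simp add: pw)
    have "(\<lambda>m. t ^ (m + n0) *\<^sub>R z (m + n0)) sums 0"
      using sums_zero_iff_shift[of n0 "\<lambda>n. t ^ n *\<^sub>R z n" 0] below s0 by simp
    then have "(\<lambda>m. (1 / t ^ n0) *\<^sub>R (t ^ (m + n0) *\<^sub>R z (m + n0))) sums ((1 / t ^ n0) *\<^sub>R 0)"
      by (rule sums_scaleR_right)
    moreover have "(1 / t ^ n0) *\<^sub>R (t ^ (m + n0) *\<^sub>R z (m + n0)) = t ^ m *\<^sub>R g m" for m
      using t0 by (simp add: g_def power_add)
    ultimately have s1: "(\<lambda>m. t ^ m *\<^sub>R g m) sums 0" by simp
    then have s2: "(\<lambda>m. t ^ Suc m *\<^sub>R g (Suc m)) sums (- g 0)"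
      using sums_Suc_iff[of "\<lambda>m. t ^ m *\<^sub>R g m" "- g 0"] by simp
    have sn: "summable (\<lambda>m. norm (t ^ Suc m *\<^sub>R g (Suc m)))"
    proof (rule summable_comparison_test'[OF summable_mult[OF sg, of t]])
      show "norm (norm (t ^ Suc m *\<^sub>R g (Suc m))) \<le> t * norm (g (Suc m))" for m
      proof -
        have "t ^ Suc m \<le> t" using t0 t1 by (simp add: mult_left_le_one_le power_le_one)
        then show ?thesis using t0 by (simp add: mult_right_mono)
      qed
    qed
    have u: "- g 0 = (\<Sum>m. t ^ Suc m *\<^sub>R g (Suc m))" by (rule sums_unique[OF s2])
    have "norm (z n0) = norm (- g 0)" by (simp add: g_def)
    also have "\<dots> = norm (\<Sum>m. t ^ Suc m *\<^sub>R g (Suc m))" by (simp only: u)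
    also have "\<dots> \<le> (\<Sum>m. norm (t ^ Suc m *\<^sub>R g (Suc m)))" by (rule summable_norm[OF sn])
    also have "\<dots> \<le> (\<Sum>m. t * norm (g (Suc m)))"
    proof (rule suminf_le[OF _ sn summable_mult[OF sg]])
      show "norm (t ^ Suc m *\<^sub>R g (Suc m)) \<le> t * norm (g (Suc m))" for m
      proof -
        have "t ^ Suc m \<le> t" using t0 t1 by (simp add: mult_left_le_one_le power_le_one)
        then show ?thesis using t0 by (simp add: mult_right_mono)
      qed
    qed
    also have "\<dots> = t * C" unfolding C_def by (rule suminf_mult[OF sg])
    finally show ?thesis .
  qed
  define t where "t = min (1/2) (norm (z n0) / (2 * (C + 1)))"
  have nz: "0 < norm (z n0)" using zn0 by simp
  have t0: "0 < t" using nz C0 by (simp add: t_def)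
  have t1: "t < 1" by (simp add: t_def)
  have "t * C \<le> norm (z n0) / (2 * (C + 1)) * C"
    using C0 by (intro mult_right_mono) (auto simp: t_def)
  also have "\<dots> < norm (z n0)"
    using nz C0 by (simp add: field_simps) (use mult_nonneg_nonneg[OF C0 norm_ge_zero[of "z n0"]] nz in linarith)
  finally show False using key[OF t0 t1] by simp
qed

lemma indep:
  assumes g: "good L" and h: "\<And>p. norm p < 1 \<Longrightarrow> (\<Sum>j<length L. ev (Wl L ! j) p * c j) = 0"
  shows "\<forall>j<length L. c j = 0"
proof -
  define d where "d = length L"
  have lw: "l1 (Wl L ! j)" if "j < d" for j
    using l1_Wl[OF g] that length_Wl[of L] d_def by (metis nth_mem)
  define z where "z = (\<lambda>n. \<Sum>j<d. (Wl L ! j) n * c j)"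
  have lz: "l1 z" unfolding z_def by (rule l1_sum) (simp add: lw)
  have evz: "ev z p = (\<Sum>j<d. ev (Wl L ! j) p * c j)" if p: "norm p < 1" for p
  proof -
    have "ev z p = (\<Sum>n. \<Sum>j<d. p ^ n * (Wl L ! j) n * c j)"
      unfolding ev_def z_def by (simp add: sum_distrib_left mult.assoc)
    also have "\<dots> = (\<Sum>j<d. \<Sum>n. p ^ n * (Wl L ! j) n * c j)"
      by (rule suminf_sum) (simp add: summable_mult2 ev_summable[OF p lw])
    also have "\<dots> = (\<Sum>j<d. ev (Wl L ! j) p * c j)"
      unfolding ev_def by (rule sum.cong[OF refl]) (simp add: suminf_mult2 ev_summable[OF p lw])
    finally show ?thesis .
  qed
  have z0: "z = (\<lambda>n. 0)"
  proof (rule identity_principle[OF lz])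
    fix t :: real assume "0 < t" "t < 1"
    then have "norm (of_real t :: hq) < 1" by simp
    then show "ev z (of_real t) = 0" using evz h d_def by simp
  qed
  show ?thesis
  proof (intro allI impI)
    fix i assume i: "i < length L"
    have li: "l1 (Wl L ! i)" using lw i d_def by simp
    have "ip (Wl L ! i) z = (\<Sum>j<d. ip (Wl L ! i) (\<lambda>n. (Wl L ! j) n * c j))"
      unfolding z_def by (rule ip_sum_right[OF li]) (simp add: lw)
    also have "\<dots> = (\<Sum>j<d. ip (Wl L ! i) (Wl L ! j) * c j)"
      by (rule sum.cong[OF refl]) (simp add: ip_mult_right li lw)
    also have "\<dots> = (\<Sum>j<d. (if i = j then c j else 0))"
      by (rule sum.cong[OF refl]) (use g i d_def in \<open>simp add: orth_Wl\<close>)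
    also have "\<dots> = c i" using i d_def by simp
    finally show "c i = 0" using z0 by simp
  qed
qed


lemma span_lemma:
  fixes G :: "(nat \<Rightarrow> hq) set"
  assumes "\<forall>c. (\<forall>g\<in>G. (\<Sum>j<d. hcnj (c j) * g j) = 0) \<longrightarrow> (\<forall>j<d. c j = 0)"
  shows "\<exists>(N::nat) gs as. (\<forall>i<N. gs i \<in> G) \<and> (\<forall>j<d. v j = (\<Sum>i<N. gs i j * as i))"
  using assms
proof (induction d arbitrary: G v)
  case 0
  show ?case by (rule exI[where x="0::nat"]) auto
next
  case (Suc d)
  have "\<exists>g0\<in>G. g0 d \<noteq> 0"
  proof (rule ccontr)
    assume "\<not> (\<exists>g0\<in>G. g0 d \<noteq> 0)"
    then have all0: "\<forall>g\<in>G. g d = 0" by auto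
    define c where "c = (\<lambda>j. if j = d then (1::hq) else 0)"
    have cs: "(\<Sum>j<Suc d. hcnj (c j) * g j) = g d" for g
    proof -
      have "(\<Sum>j<Suc d. hcnj (c j) * g j) = (\<Sum>j<d. hcnj (c j) * g j) + hcnj (c d) * g d"
        by (rule sum.lessThan_Suc)
      also have "(\<Sum>j<d. hcnj (c j) * g j) = 0" by (rule sum.neutral) (auto simp: c_def)
      finally show ?thesis by (simp add: c_def)
    qed
    have "\<forall>g\<in>G. (\<Sum>j<Suc d. hcnj (c j) * g j) = 0" using all0 cs by simp
    then have "c d = 0" using Suc.prems by blast
    then show False by (simp add: c_def)
  qed
  then obtain g0 where g0G: "g0 \<in> G" and g0d: "g0 d \<noteq> 0" by blast
  define m where "m j = g0 j * inverse (g0 d)" for j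
  have md: "m d = 1" using g0d by (simp add: m_def)
  define P where "P g = (\<lambda>j. g j - m j * g d)" for g :: "nat \<Rightarrow> hq"
  define G' where "G' = P ` G"
  have nd': "\<forall>c. (\<forall>g\<in>G'. (\<Sum>j<d. hcnj (c j) * g j) = 0) \<longrightarrow> (\<forall>j<d. c j = 0)"
  proof (rule allI, rule impI)
    fix c assume hc: "\<forall>g\<in>G'. (\<Sum>j<d. hcnj (c j) * g j) = 0"
    define c' where "c' j = (if j < d then c j else - hcnj (\<Sum>i<d. hcnj (c i) * m i))" for j
    have "\<forall>g\<in>G. (\<Sum>j<Suc d. hcnj (c' j) * g j) = 0"
    proof
      fix g assume gG: "g \<in> G"
      have "(\<Sum>j<Suc d. hcnj (c' j) * g j) = (\<Sum>j<d. hcnj (c' j) * g j) + hcnj (c' d) * g d"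
        by (rule sum.lessThan_Suc)
      also have "(\<Sum>j<d. hcnj (c' j) * g j) = (\<Sum>j<d. hcnj (c j) * g j)"
        by (rule sum.cong) (auto simp: c'_def)
      also have "hcnj (c' d) * g d = - ((\<Sum>i<d. hcnj (c i) * m i) * g d)"
        by (simp add: c'_def)
      also have "(\<Sum>j<d. hcnj (c j) * g j) + - ((\<Sum>i<d. hcnj (c i) * m i) * g d)
          = (\<Sum>j<d. hcnj (c j) * P g j)"
        unfolding P_def by (simp add: right_diff_distrib sum_subtractf sum_distrib_right mult.assoc)
      also have "\<dots> = 0" using hc gG G'_def by auto
      finally show "(\<Sum>j<Suc d. hcnj (c' j) * g j) = 0" .
    qed
    then have "\<forall>j<Suc d. c' j = 0" using Suc.prems by blast
    then show "\<forall>j<d. c j = 0" by (metis (no_types, lifting) c'_def less_SucI)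
  qed
  define v' where "v' j = v j - m j * v d" for j
  obtain N :: nat and gs' as where gs'G: "\<forall>i<N. gs' i \<in> G'" and hv': "\<forall>j<d. v' j = (\<Sum>i<N. gs' i j * as i)"
    using Suc.IH[OF nd', of v'] by blast
  have "\<forall>i. \<exists>g. i < N \<longrightarrow> g \<in> G \<and> gs' i = P g" using gs'G G'_def by blast
  then obtain gs where gsP: "\<forall>i. i < N \<longrightarrow> gs i \<in> G \<and> gs' i = P (gs i)" by (metis choice)
  define S where "S j = (\<Sum>i<N. gs i j * as i)" for j
  define gs2 where "gs2 i = (if i < N then gs i else g0)" for i
  define as2 where "as2 i = (if i < N then as i else inverse (g0 d) * (v d - S d))" for i
  have sum2: "(\<Sum>i<Suc N. gs2 i j * as2 i) = S j + m j * (v d - S d)" for j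
  proof -
    have "(\<Sum>i<Suc N. gs2 i j * as2 i) = (\<Sum>i<N. gs2 i j * as2 i) + gs2 N j * as2 N"
      by (rule sum.lessThan_Suc)
    also have "(\<Sum>i<N. gs2 i j * as2 i) = S j"
      unfolding S_def by (rule sum.cong) (auto simp: gs2_def as2_def)
    also have "gs2 N j * as2 N = m j * (v d - S d)"
      by (simp add: gs2_def as2_def m_def mult.assoc)
    finally show ?thesis .
  qed
  show ?case
  proof (intro exI conjI allI impI)
    show "gs2 i \<in> G" if "i < Suc N" for i using gsP g0G that by (simp add: gs2_def)
    fix j assume j: "j < Suc d"
    show "v j = (\<Sum>i<Suc N. gs2 i j * as2 i)"
    proof (cases "j = d")
      case True then show ?thesis using sum2 md by simp
    next
      case False
      then have jd: "j < d" using j by simp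
      have "v' j = (\<Sum>i<N. gs' i j * as i)" using hv' jd by simp
      also have "\<dots> = (\<Sum>i<N. (gs i j - m j * gs i d) * as i)"
        by (rule sum.cong) (use gsP in \<open>auto simp: P_def\<close>)
      also have "\<dots> = S j - m j * S d"
        by (simp add: S_def left_diff_distrib sum_subtractf sum_distrib_left mult.assoc)
      finally have "v' j = S j - m j * S d" .
      then have "v j = S j + m j * (v d - S d)" by (simp add: v'_def algebra_simps)
      then show ?thesis using sum2 by simp
    qed
  qed
qed


lemma Rep_power: "Rep_hq (x ^ n) = qpow (Rep_hq x) n"
  by (induction n) (simp_all add: qreal_def)

lemma bl_Rep: "bounded_linear Rep_hq"
  by (rule bounded_linear_intro[where K=1]) (auto simp: norm_Rep)

lemma Rep_suminf: "summable f \<Longrightarrow> Rep_hq (suminf f) = (\<Sum>n. Rep_hq (f n))"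
  by (rule bounded_linear.suminf[OF bl_Rep])

lemma Rep_sum_mult: "Rep_hq (\<Sum>i\<in>A. X i * Y i) = (\<Sum>i\<in>A. qmul (Rep_hq (X i)) (Rep_hq (Y i)))"
  by (simp add: Rep_sum)

lemma qball_Rep: "Rep_hq P \<in> qball \<longleftrightarrow> norm P < 1"
  by (simp add: qball_def norm_Rep)

lemma qeval_eq:
  assumes a: "l1 (\<lambda>n. Abs_hq (a n))" and P: "norm P < 1"
  shows "qeval a (Rep_hq P) = Rep_hq (ev (\<lambda>n. Abs_hq (a n)) P)"
  unfolding ev_def qeval_def
  by (simp add: Rep_suminf[OF ev_summable[OF P a]] Rep_power)

lemma kernelB_eq:
  assumes b: "l1 (\<lambda>n. Abs_hq (b n))" and P: "norm P < 1" and Q: "norm Q < 1"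
  shows "kernelB b (Rep_hq P) (Rep_hq Q) = Rep_hq (Khq (\<lambda>n. Abs_hq (b n)) P Q)"
  unfolding Khq_def kernelB_def
  by (simp add: Rep_suminf[OF K_ip(2)[OF b P Q]] Rep_power qeval_eq[OF b P] qeval_eq[OF b Q] qreal_def)

lemma sum_list_map_nth: "(\<Sum>w\<leftarrow>xs. f w) = (\<Sum>j<length xs. f (xs ! j))"
  by (simp add: sum_list_sum_nth atLeast0LessThan)

theorem mainTheorem4:
  fixes cms :: "(quat \<times> nat) list" and als :: "quat list list"
  assumes "\<forall>cm\<in>set cms. fst cm \<in> qball - {0}"
    and "\<forall>al\<in>set als. \<forall>a\<in>set al. a \<in> qball - {0}"
  shows "rdim_eq (kernel_span (kernelB (blaschke_prod cms als))) (blaschke_degree cms als)"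
proof -
  define b where "b = blaschke_prod cms als"
  define L where "L = flatL cms als"
  define W where "W = Wl L"
  define d where "d = blaschke_degree cms als"
  define E where "E j P = ev (W ! j) P" for j P
  have gL: "good L" using flatL_ball[OF assms] by (simp add: good_def L_def)
  have dL: "d = length L" by (simp add: d_def L_def length_flatL)
  have dW: "length W = d" by (simp add: W_def dL length_Wl)
  have B: "(\<lambda>n. Abs_hq (b n)) = bseq L"
  proof
    fix n
    have "fp b = BP L"
      unfolding b_def L_def by (rule fp_blaschke_prod) (use assms in auto)
    then show "Abs_hq (b n) = bseq L n" by (metis fp_nth bseq_def)
  qed
  have lB: "l1 (\<lambda>n. Abs_hq (b n))" unfolding B by (rule l1_bseq[OF gL])
  have K: "kernelB b (Rep_hq P) (Rep_hq Q) = Rep_hq (\<Sum>j<d. E j P * hcnj (E j Q))"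
    if P: "norm P < 1" and Q: "norm Q < 1" for P Q
    unfolding kernelB_eq[OF lB P Q] B kernel_formula[OF gL P Q] sum_list_map_nth E_def W_def[symmetric] dW ..
  have IND: "\<forall>j<d. c j = 0" if h: "\<And>P. norm P < 1 \<Longrightarrow> (\<Sum>j<d. E j P * c j) = 0" for c
    using indep[OF gL, of c] h by (simp add: E_def W_def dL)
  define fs where "fs i = (\<lambda>p. Rep_hq (E i (Abs_hq p)))" for i
  have fsR: "fs i (Rep_hq P) = Rep_hq (E i P)" for i P by (simp add: fs_def Rep_hq_inverse)
  have allP: "(\<forall>p\<in>qball. R p) \<longleftrightarrow> (\<forall>P. norm P < 1 \<longrightarrow> R (Rep_hq P))" for R
    by (metis Rep_hq_inverse Abs_hq_inverse qball_Rep UNIV_I)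
  show ?thesis
    unfolding rdim_eq_def b_def[symmetric] d_def[symmetric]
  proof (intro exI[where x=fs] conjI)
    show "\<forall>i<d. fs i \<in> kernel_span (kernelB b)"
    proof (intro allI impI)
      fix k assume k: "k < d"
      define G where "G = (\<lambda>Q. \<lambda>j. hcnj (E j Q)) ` {Q. norm Q < 1}"
      have nd: "\<forall>c. (\<forall>g\<in>G. (\<Sum>j<d. hcnj (c j) * g j) = 0) \<longrightarrow> (\<forall>j<d. c j = 0)"
      proof (rule allI, rule impI)
        fix c assume hc: "\<forall>g\<in>G. (\<Sum>j<d. hcnj (c j) * g j) = 0"
        show "\<forall>j<d. c j = 0"
        proof (rule IND)
          fix P :: hq assume P: "norm P < 1"
          have "(\<Sum>j<d. hcnj (c j) * hcnj (E j P)) = 0" using hc P by (auto simp: G_def)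
          then have "hcnj (\<Sum>j<d. E j P * c j) = 0" by (simp add: hcnj_sum hcnj_mult)
          then show "(\<Sum>j<d. E j P * c j) = 0" by simp
        qed
      qed
      obtain N :: nat and gs as where gsG: "\<forall>i<N. gs i \<in> G"
        and hv: "\<forall>j<d. (if j = k then 1 else 0) = (\<Sum>i<N. gs i j * as i)"
        using span_lemma[OF nd, of "\<lambda>j. if j = k then 1 else 0"] by blast
      have "\<forall>i. \<exists>Q. i < N \<longrightarrow> norm Q < 1 \<and> gs i = (\<lambda>j. hcnj (E j Q))" using gsG by (auto simp: G_def)
      then obtain Qs where Qs: "\<forall>i. i < N \<longrightarrow> norm (Qs i) < 1 \<and> gs i = (\<lambda>j. hcnj (E j (Qs i)))"
        by (metis choice)
      have A1: "\<forall>i<N. Rep_hq (Qs i) \<in> qball" using Qs by (simp add: qball_Rep)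
      have A2: "\<forall>p\<in>qball. fs k p = (\<Sum>i<N. qmul (kernelB b p (Rep_hq (Qs i))) (Rep_hq (as i)))"
          unfolding allP
        proof (intro allI impI)
          fix P :: hq assume P: "norm P < 1"
          have "(\<Sum>i<N. qmul (kernelB b (Rep_hq P) (Rep_hq (Qs i))) (Rep_hq (as i)))
              = (\<Sum>i<N. qmul (Rep_hq (\<Sum>j<d. E j P * hcnj (E j (Qs i)))) (Rep_hq (as i)))"
            by (rule sum.cong[OF refl]) (use Qs P in \<open>simp add: K\<close>)
          also have "\<dots> = Rep_hq (\<Sum>i<N. (\<Sum>j<d. E j P * hcnj (E j (Qs i))) * as i)"
            by (rule Rep_sum_mult[symmetric])
          also have "(\<Sum>i<N. (\<Sum>j<d. E j P * hcnj (E j (Qs i))) * as i)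
              = (\<Sum>j<d. E j P * (\<Sum>i<N. gs i j * as i))"
            using Qs by (simp add: sum_distrib_left sum_distrib_right mult.assoc sum.swap[of _ "{..<N}"])
          also have "\<dots> = (\<Sum>j<d. E j P * (if j = k then 1 else 0))"
            by (rule sum.cong[OF refl]) (use hv in simp)
          also have "\<dots> = E k P" using k by (simp add: if_distrib cong: if_cong)
          finally show "fs k (Rep_hq P) = (\<Sum>i<N. qmul (kernelB b (Rep_hq P) (Rep_hq (Qs i))) (Rep_hq (as i)))"
            by (simp add: fsR)
        qed
      show "fs k \<in> kernel_span (kernelB b)" unfolding kernel_span_def mem_Collect_eq
        apply (rule exI[where x=N])
        apply (rule exI[where x="\<lambda>i. Rep_hq (Qs i)"])
        apply (rule exI[where x="\<lambda>i. Rep_hq (as i)"])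
        using A1 A2 by simp
    qed
    show "\<forall>a. (\<forall>p\<in>qball. (\<Sum>i<d. qmul (fs i p) (a i)) = 0) \<longrightarrow> (\<forall>i<d. a i = 0)"
    proof (intro allI impI)
      fix a i assume h: "\<forall>p\<in>qball. (\<Sum>i<d. qmul (fs i p) (a i)) = 0" and i: "i < d"
      have "\<forall>j<d. Abs_hq (a j) = 0"
      proof (rule IND)
        fix P :: hq assume P: "norm P < 1"
        have "Rep_hq (\<Sum>j<d. E j P * Abs_hq (a j)) = (\<Sum>j<d. qmul (fs j (Rep_hq P)) (a j))"
          by (simp add: Rep_sum_mult fsR)
        also have "\<dots> = 0" using h P by (simp add: allP)
        finally show "(\<Sum>j<d. E j P * Abs_hq (a j)) = 0" by (simp add: hq_eq_iff)
      qed
      then show "a i = 0" using i by (simp add: Abs_eq_0_iff)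
    qed
    show "\<forall>f\<in>kernel_span (kernelB b). \<exists>a. \<forall>p\<in>qball. f p = (\<Sum>i<d. qmul (fs i p) (a i))"
    proof
      fix f assume "f \<in> kernel_span (kernelB b)"
      then obtain N :: nat and qs as where qs: "\<forall>i<N. qs i \<in> qball"
        and hf: "\<forall>p\<in>qball. f p = (\<Sum>i<N. qmul (kernelB b p (qs i)) (as i))"
        unfolding kernel_span_def by blast
      define Q where "Q i = Abs_hq (qs i)" for i
      have Q: "norm (Q i) < 1" if "i < N" for i using qs that by (simp add: Q_def qball_def norm_Abs)
      have qsR: "qs i = Rep_hq (Q i)" for i by (simp add: Q_def)
      define C where "C j = (\<Sum>i<N. hcnj (E j (Q i)) * Abs_hq (as i))" for j
      show "\<exists>a. \<forall>p\<in>qball. f p = (\<Sum>i<d. qmul (fs i p) (a i))"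
      proof (intro exI[where x="\<lambda>j. Rep_hq (C j)"])
        show "\<forall>p\<in>qball. f p = (\<Sum>i<d. qmul (fs i p) (Rep_hq (C i)))"
          unfolding allP
        proof (intro allI impI)
          fix P :: hq assume P: "norm P < 1"
          have "f (Rep_hq P) = (\<Sum>i<N. qmul (kernelB b (Rep_hq P) (Rep_hq (Q i))) (as i))"
            using hf P by (simp add: allP qsR)
          also have "\<dots> = (\<Sum>i<N. qmul (Rep_hq (\<Sum>j<d. E j P * hcnj (E j (Q i)))) (Rep_hq (Abs_hq (as i))))"
            by (rule sum.cong[OF refl]) (use Q P in \<open>simp add: K\<close>)
          also have "\<dots> = Rep_hq (\<Sum>i<N. (\<Sum>j<d. E j P * hcnj (E j (Q i))) * Abs_hq (as i))"
            by (rule Rep_sum_mult[symmetric])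
          also have "(\<Sum>i<N. (\<Sum>j<d. E j P * hcnj (E j (Q i))) * Abs_hq (as i)) = (\<Sum>j<d. E j P * C j)"
            by (simp add: C_def sum_distrib_left sum_distrib_right mult.assoc sum.swap[of _ "{..<N}"])
          also have "Rep_hq \<dots> = (\<Sum>j<d. qmul (fs j (Rep_hq P)) (Rep_hq (C j)))"
            by (simp add: Rep_sum_mult fsR)
          finally show "f (Rep_hq P) = (\<Sum>i<d. qmul (fs i (Rep_hq P)) (Rep_hq (C i)))" .
        qed
      qed
    qed
  qed
qed


end
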